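(* Let $\Sigma$ be a finite ranked set, $r\in\mathbb{N}$ and $M\subseteq\mathbb{N}$ finite. Let $\approx$ be the equivalence relation on $\mathsf{H}\Sigma$ identifying two sourced hypergraphs iff they have the same arity and their models satisfy the same sentences of counting MSO of quantifier rank at most $r$ using only moduli from $M$. Then $\approx$ is a congruence of the $\mathsf{H}$-algebra $\mathsf{H}\Sigma$.
   Context: A ranked set is a set in which each element has an arity in $\{0,1,2,\dots\}$. A sourced hypergraph of arity $n$ over $\Sigma$: finite vertex set, finite ranked set of hyperedges labelled arity-preservingly by $\Sigma$, incidence mapping each $m$-ary hyperedge $e$ to a non-repeating list $e[1],\dots,e[m]$ of vertices, injective sources $\{1,\dots,n\}\to$ vertices; $\mathsf{H}\Sigma$ denotes these up to isomorphism. Flattening of $K\in\mathsf{H}\mathsf{H}\Sigma$: hyperedges $(e,f)$, $e$ a hyperedge of $K$, $f$ a hyperedge of the label of $e$ (label from $f$); vertices: vertices of $K$ and pairs $(e,v)$ with $v$ a non-source vertex of the label of $e$; sources from $K$; incidence of $(e,f)$ is that of $f$ with $v\mapsto(e,v)$ for non-sources and $v\mapsto e[i]$ if $v$ is the $i$-th source of the label of $e$. $\mathsf{H}\Sigma$ is an $\mathsf{H}$-algebra with flattening as product. A polynomial operation with variables a ranked set $X$ is given by $t\in\mathsf{H}(\mathsf{H}\Sigma+X)$ and maps an arity-preserving $\eta:X\to\mathsf{H}\Sigma$ to the flattening of $t$ with each label $x\in X$ replaced by $\eta(x)$. A congruence is an equivalence relation such that for every polynomial operation, componentwise equivalent valuations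 give equivalent results. The model of $K\in\mathsf{H}\Sigma$ has universe the disjoint union of vertices and hyperedges, a unary relation per label $a\in\Sigma$, binary relations $\{(e,v):e[i]=v\}$ for $i$ up to the maximal arity in $\Sigma$, and constants for the sources. Counting MSO here is MSO extended with predicates $|Y|\equiv k\bmod m$, a set-inclusion predicate, a singleton predicate, and set constants $[\psi]$ for every quantifier-free formula $\psi(x)$ with one free variable; quantifier rank counts first- and second-order quantifiers alike. *)

theory Defs
  imports Main "HOL-Library.Nat_Bijection"
begin

text \<open>Vertices and hyperedges are
  natural numbers; the incidence of a hyperedge is a list of vertices, the sources are
  a list of vertices (the i-th source is the (i-1)-th list element).\<close>

record 'l hg =
  verts :: "nat set"
  edges :: "nat set"
  lab   :: "nat \<Rightarrow> 'l"
  inc   :: "nat \<Rightarrow> nat list"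
  src   :: "nat list"

definition arity :: "'l hg \<Rightarrow> nat" where
  "arity G = length (src G)"

definition wf_hg :: "'l set \<Rightarrow> ('l \<Rightarrow> nat) \<Rightarrow> 'l hg \<Rightarrow> bool" where
  "wf_hg Lab rk G \<longleftrightarrow>
     finite (verts G) \<and> finite (edges G) \<and>
     (\<forall>e\<in>edges G. lab G e \<in> Lab \<and> length (inc G e) = rk (lab G e)
                    \<and> distinct (inc G e) \<and> set (inc G e) \<subseteq> verts G) \<and>
     distinct (src G) \<and> set (src G) \<subseteq> verts G"

text \<open>The carrier H Sigma (concrete representatives; everything below is invariant
  under isomorphism).\<close>
definition HS :: "'a set \<Rightarrow> ('a \<Rightarrow> nat) \<Rightarrow> 'a hg set" where
  "HS Sig ar = {G. wf_hg Sig ar G}"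

text \<open>Encoding of the vertices/edges of the flattening as natural numbers:
  vertex v of K becomes 2v, pair (e,v) becomes 2*prod_encode(e,v)+1,
  hyperedge (e,f) becomes prod_encode(e,f).\<close>

definition flat_vmap :: "'a hg hg \<Rightarrow> nat \<Rightarrow> nat \<Rightarrow> nat" where
  "flat_vmap K e v =
     (if v \<in> set (src (lab K e))
      then 2 * (inc K e ! (LEAST i. i < length (src (lab K e)) \<and> src (lab K e) ! i = v))
      else 2 * prod_encode (e, v) + 1)"

definition flat :: "'a hg hg \<Rightarrow> 'a hg" where
  "flat K = \<lparr> verts = (\<lambda>v. 2 * v) ` verts K
                     \<union> {2 * prod_encode (e, v) + 1 | e v.
                          e \<in> edges K \<and> v \<in> verts (lab K e) \<and> v \<notin> set (src (lab K e))},
             edges = {prod_encode (e, f) | e f. e \<in> edges K \<and> f \<in> edges (lab K e)},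
             lab = (\<lambda>d. case prod_decode d of (e, f) \<Rightarrow> lab (lab K e) f),
             inc = (\<lambda>d. case prod_decode d of (e, f) \<Rightarrow>
                           map (flat_vmap K e) (inc (lab K e) f)),
             src = map (\<lambda>v. 2 * v) (src K) \<rparr>"

definition sum_rank :: "('x \<Rightarrow> nat) \<Rightarrow> ('a hg + 'x) \<Rightarrow> nat" where
  "sum_rank arx l = (case l of Inl G \<Rightarrow> arity G | Inr x \<Rightarrow> arx x)"

definition poly_terms :: "'a set \<Rightarrow> ('a \<Rightarrow> nat) \<Rightarrow> 'x set \<Rightarrow> ('x \<Rightarrow> nat) \<Rightarrow> ('a hg + 'x) hg set" where
  "poly_terms Sig ar Xs arx = {t. wf_hg (Inl ` HS Sig ar \<union> Inr ` Xs) (sum_rank arx) t}"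

definition valuations :: "'a set \<Rightarrow> ('a \<Rightarrow> nat) \<Rightarrow> 'x set \<Rightarrow> ('x \<Rightarrow> nat) \<Rightarrow> ('x \<Rightarrow> 'a hg) set" where
  "valuations Sig ar Xs arx = {\<eta>. \<forall>x\<in>Xs. \<eta> x \<in> HS Sig ar \<and> arity (\<eta> x) = arx x}"

definition subst_vars :: "('x \<Rightarrow> 'a hg) \<Rightarrow> ('a hg + 'x) hg \<Rightarrow> 'a hg hg" where
  "subst_vars \<eta> t = \<lparr> verts = verts t, edges = edges t,
       lab = (\<lambda>e. case lab t e of Inl G \<Rightarrow> G | Inr x \<Rightarrow> \<eta> x),
       inc = inc t, src = src t \<rparr>"

definition poly_op :: "('a hg + 'x) hg \<Rightarrow> ('x \<Rightarrow> 'a hg) \<Rightarrow> 'a hg" where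
  "poly_op t \<eta> = flat (subst_vars \<eta> t)"

definition congruence_wrt ::
  "'a set \<Rightarrow> ('a \<Rightarrow> nat) \<Rightarrow> ('a hg \<times> 'a hg) set \<Rightarrow> 'x set \<Rightarrow> ('x \<Rightarrow> nat) \<Rightarrow> bool" where
  "congruence_wrt Sig ar R Xs arx \<longleftrightarrow>
     equiv (HS Sig ar) R \<and>
     (\<forall>t \<in> poly_terms Sig ar Xs arx. \<forall>\<eta> \<in> valuations Sig ar Xs arx.
        \<forall>\<eta>' \<in> valuations Sig ar Xs arx.
          (\<forall>x\<in>Xs. (\<eta> x, \<eta>' x) \<in> R) \<longrightarrow> (poly_op t \<eta>, poly_op t \<eta>') \<in> R)"

text \<open>First-order terms: variables and source constants (Cst i is the i-th source, i >= 1).\<close>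
datatype fterm = FVar nat | Cst nat

text \<open>Formulas and set terms. SConst psi is the set constant [psi], where psi has the
  single free first-order variable FVar 0.\<close>
datatype 'a cmso =
    Eq fterm fterm
  | Lab 'a fterm
  | Inc nat fterm fterm
  | Mem fterm "'a sterm"
  | CardMod "'a sterm" nat nat
  | Subset "'a sterm" "'a sterm"
  | Single "'a sterm"
  | Neg "'a cmso"
  | Conj "'a cmso" "'a cmso"
  | Ex1 nat "'a cmso"
  | Ex2 nat "'a cmso"
and 'a sterm = SVar nat | SConst "'a cmso"

fun fv1_t :: "fterm \<Rightarrow> nat set" where
  "fv1_t (FVar x) = {x}" | "fv1_t (Cst i) = {}"

fun fv1 :: "'a cmso \<Rightarrow> nat set" and fv1_s :: "'a sterm \<Rightarrow> nat set" where
  "fv1 (Eq s t) = fv1_t s \<union> fv1_t t"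
| "fv1 (Lab a t) = fv1_t t"
| "fv1 (Inc i s t) = fv1_t s \<union> fv1_t t"
| "fv1 (Mem t S) = fv1_t t \<union> fv1_s S"
| "fv1 (CardMod S k m) = fv1_s S"
| "fv1 (Subset S T) = fv1_s S \<union> fv1_s T"
| "fv1 (Single S) = fv1_s S"
| "fv1 (Neg \<phi>) = fv1 \<phi>"
| "fv1 (Conj \<phi> \<psi>) = fv1 \<phi> \<union> fv1 \<psi>"
| "fv1 (Ex1 x \<phi>) = fv1 \<phi> - {x}"
| "fv1 (Ex2 X \<phi>) = fv1 \<phi>"
| "fv1_s (SVar X) = {}"
| "fv1_s (SConst \<psi>) = {}"

fun fv2 :: "'a cmso \<Rightarrow> nat set" and fv2_s :: "'a sterm \<Rightarrow> nat set" where
  "fv2 (Eq s t) = {}"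
| "fv2 (Lab a t) = {}"
| "fv2 (Inc i s t) = {}"
| "fv2 (Mem t S) = fv2_s S"
| "fv2 (CardMod S k m) = fv2_s S"
| "fv2 (Subset S T) = fv2_s S \<union> fv2_s T"
| "fv2 (Single S) = fv2_s S"
| "fv2 (Neg \<phi>) = fv2 \<phi>"
| "fv2 (Conj \<phi> \<psi>) = fv2 \<phi> \<union> fv2 \<psi>"
| "fv2 (Ex1 x \<phi>) = fv2 \<phi>"
| "fv2 (Ex2 X \<phi>) = fv2 \<phi> - {X}"
| "fv2_s (SVar X) = {X}"
| "fv2_s (SConst \<psi>) = {}"

text \<open>Quantifier rank: first- and second-order quantifiers count alike; set constants
  are quantifier-free.\<close>
fun qrank :: "'a cmso \<Rightarrow> nat" where
  "qrank (Neg \<phi>) = qrank \<phi>"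
| "qrank (Conj \<phi> \<psi>) = max (qrank \<phi>) (qrank \<psi>)"
| "qrank (Ex1 x \<phi>) = Suc (qrank \<phi>)"
| "qrank (Ex2 X \<phi>) = Suc (qrank \<phi>)"
| "qrank _ = 0"

fun ok_t :: "nat \<Rightarrow> fterm \<Rightarrow> bool" where
  "ok_t n (FVar x) = True" | "ok_t n (Cst i) = (1 \<le> i \<and> i \<le> n)"

fun ok :: "'a set \<Rightarrow> nat \<Rightarrow> nat \<Rightarrow> nat set \<Rightarrow> 'a cmso \<Rightarrow> bool"
and ok_s :: "'a set \<Rightarrow> nat \<Rightarrow> nat \<Rightarrow> nat set \<Rightarrow> 'a sterm \<Rightarrow> bool" where
  "ok Sig mx n M (Eq s t) = (ok_t n s \<and> ok_t n t)"
| "ok Sig mx n M (Lab a t) = (a \<in> Sig \<and> ok_t n t)"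
| "ok Sig mx n M (Inc i s t) = (1 \<le> i \<and> i \<le> mx \<and> ok_t n s \<and> ok_t n t)"
| "ok Sig mx n M (Mem t S) = (ok_t n t \<and> ok_s Sig mx n M S)"
| "ok Sig mx n M (CardMod S k m) = (m \<in> M \<and> ok_s Sig mx n M S)"
| "ok Sig mx n M (Subset S T) = (ok_s Sig mx n M S \<and> ok_s Sig mx n M T)"
| "ok Sig mx n M (Single S) = ok_s Sig mx n M S"
| "ok Sig mx n M (Neg \<phi>) = ok Sig mx n M \<phi>"
| "ok Sig mx n M (Conj \<phi> \<psi>) = (ok Sig mx n M \<phi> \<and> ok Sig mx n M \<psi>)"
| "ok Sig mx n M (Ex1 x \<phi>) = ok Sig mx n M \<phi>"
| "ok Sig mx n M (Ex2 X \<phi>) = ok Sig mx n M \<phi>"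
| "ok_s Sig mx n M (SVar X) = True"
| "ok_s Sig mx n M (SConst \<psi>) =
     (ok Sig mx n M \<psi> \<and> qrank \<psi> = 0 \<and> fv1 \<psi> \<subseteq> {0} \<and> fv2 \<psi> = {})"

definition univ :: "'a hg \<Rightarrow> (nat + nat) set" where
  "univ G = Inl ` verts G \<union> Inr ` edges G"

fun tval :: "'a hg \<Rightarrow> (nat \<Rightarrow> nat + nat) \<Rightarrow> fterm \<Rightarrow> nat + nat" where
  "tval G \<nu> (FVar x) = \<nu> x"
| "tval G \<nu> (Cst i) = Inl (src G ! (i - 1))"

fun sat :: "'a hg \<Rightarrow> (nat \<Rightarrow> nat + nat) \<Rightarrow> (nat \<Rightarrow> (nat + nat) set) \<Rightarrow> 'a cmso \<Rightarrow> bool"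
and seval :: "'a hg \<Rightarrow> (nat \<Rightarrow> nat + nat) \<Rightarrow> (nat \<Rightarrow> (nat + nat) set) \<Rightarrow> 'a sterm \<Rightarrow> (nat + nat) set"
where
  "sat G \<nu> \<sigma> (Eq s t) = (tval G \<nu> s = tval G \<nu> t)"
| "sat G \<nu> \<sigma> (Lab a t) = (\<exists>e\<in>edges G. tval G \<nu> t = Inr e \<and> lab G e = a)"
| "sat G \<nu> \<sigma> (Inc i s t) = (\<exists>e\<in>edges G. \<exists>v. tval G \<nu> s = Inr e \<and> tval G \<nu> t = Inl v
                              \<and> 1 \<le> i \<and> i \<le> length (inc G e) \<and> inc G e ! (i - 1) = v)"
| "sat G \<nu> \<sigma> (Mem t S) = (tval G \<nu> t \<in> seval G \<nu> \<sigma> S)"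
| "sat G \<nu> \<sigma> (CardMod S k m) = (card (seval G \<nu> \<sigma> S) mod m = k mod m)"
| "sat G \<nu> \<sigma> (Subset S T) = (seval G \<nu> \<sigma> S \<subseteq> seval G \<nu> \<sigma> T)"
| "sat G \<nu> \<sigma> (Single S) = (\<exists>u. seval G \<nu> \<sigma> S = {u})"
| "sat G \<nu> \<sigma> (Neg \<phi>) = (\<not> sat G \<nu> \<sigma> \<phi>)"
| "sat G \<nu> \<sigma> (Conj \<phi> \<psi>) = (sat G \<nu> \<sigma> \<phi> \<and> sat G \<nu> \<sigma> \<psi>)"
| "sat G \<nu> \<sigma> (Ex1 x \<phi>) = (\<exists>u\<in>univ G. sat G (\<nu>(x := u)) \<sigma> \<phi>)"
| "sat G \<nu> \<sigma> (Ex2 X \<phi>) = (\<exists>U\<subseteq>univ G. sat G \<nu> (\<sigma>(X := U)) \<phi>)"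
| "seval G \<nu> \<sigma> (SVar X) = \<sigma> X"
| "seval G \<nu> \<sigma> (SConst \<psi>) = {u \<in> univ G. sat G (\<nu>(0 := u)) \<sigma> \<psi>}"

definition max_arity :: "'a set \<Rightarrow> ('a \<Rightarrow> nat) \<Rightarrow> nat" where
  "max_arity Sig ar = Max (insert 0 (ar ` Sig))"

definition sentences :: "'a set \<Rightarrow> ('a \<Rightarrow> nat) \<Rightarrow> nat set \<Rightarrow> nat \<Rightarrow> nat \<Rightarrow> 'a cmso set" where
  "sentences Sig ar M r n =
     {\<phi>. ok Sig (max_arity Sig ar) n M \<phi> \<and> fv1 \<phi> = {} \<and> fv2 \<phi> = {} \<and> qrank \<phi> \<le> r}"

definition models :: "'a hg \<Rightarrow> 'a cmso \<Rightarrow> bool" where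
  "models G \<phi> = sat G (\<lambda>_. Inl 0) (\<lambda>_. {}) \<phi>"

definition cmso_equiv :: "'a set \<Rightarrow> ('a \<Rightarrow> nat) \<Rightarrow> nat set \<Rightarrow> nat \<Rightarrow> ('a hg \<times> 'a hg) set" where
  "cmso_equiv Sig ar M r =
     {(G, H). G \<in> HS Sig ar \<and> H \<in> HS Sig ar \<and> arity G = arity H \<and>
        (\<forall>\<phi> \<in> sentences Sig ar M r (arity G). models G \<phi> \<longleftrightarrow> models H \<phi>)}"

end

theory Submission
  imports Defs
begin

lemma coinc:
  "ok Sig mx n M \<phi> \<Longrightarrow> (\<forall>x\<in>fv1 \<phi>. \<nu> x = \<nu>' x) \<Longrightarrow> (\<forall>X\<in>fv2 \<phi>. \<sigma> X = \<sigma>' X) \<Longrightarrow> sat G \<nu> \<sigma> \<phi> = sat G \<nu>' \<sigma>' \<phi>"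
  "ok_s Sig mx n M S \<Longrightarrow> (\<forall>x\<in>fv1_s S. \<nu> x = \<nu>' x) \<Longrightarrow> (\<forall>X\<in>fv2_s S. \<sigma> X = \<sigma>' X) \<Longrightarrow> seval G \<nu> \<sigma> S = seval G \<nu>' \<sigma>' S"
proof (induction \<phi> and S arbitrary: \<nu> \<nu>' \<sigma> \<sigma>' and \<nu> \<nu>' \<sigma> \<sigma>' rule: cmso.induct sterm.induct)
  case (Eq x1 x2)
  then show ?case by (cases x1; cases x2; auto)
next
  case (Lab x1 x2)
  then show ?case by (cases x2; auto)
next
  case (Inc x1 x2 x3)
  then show ?case by (cases x2; cases x3; auto)
next
  case (Mem x1 x2)
  have "seval G \<nu> \<sigma> x2 = seval G \<nu>' \<sigma>' x2" by (rule Mem.IH) (use Mem.prems in auto)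
  with Mem.prems show ?case by (cases x1; auto)
next
  case (CardMod x1 x2 x3)
  have "seval G \<nu> \<sigma> x1 = seval G \<nu>' \<sigma>' x1" by (rule CardMod.IH) (use CardMod.prems in auto)
  then show ?case by simp
next
  case (Subset x1 x2)
  have "seval G \<nu> \<sigma> x1 = seval G \<nu>' \<sigma>' x1" by (rule Subset.IH) (use Subset.prems in auto)
  moreover have "seval G \<nu> \<sigma> x2 = seval G \<nu>' \<sigma>' x2" by (rule Subset.IH) (use Subset.prems in auto)
  ultimately show ?case by simp
next
  case (Single x)
  have "seval G \<nu> \<sigma> x = seval G \<nu>' \<sigma>' x" by (rule Single.IH) (use Single.prems in auto)
  then show ?case by simp
next
  case (Neg x)
  have "sat G \<nu> \<sigma> x = sat G \<nu>' \<sigma>' x" by (rule Neg.IH) (use Neg.prems in auto)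
  then show ?case by simp
next
  case (Conj x1 x2)
  have "sat G \<nu> \<sigma> x1 = sat G \<nu>' \<sigma>' x1" by (rule Conj.IH) (use Conj.prems in auto)
  moreover have "sat G \<nu> \<sigma> x2 = sat G \<nu>' \<sigma>' x2" by (rule Conj.IH) (use Conj.prems in auto)
  ultimately show ?case by simp
next
  case (Ex1 x1 x2)
  have "\<And>u. sat G (\<nu>(x1:=u)) \<sigma> x2 = sat G (\<nu>'(x1:=u)) \<sigma>' x2"
    by (rule Ex1.IH) (use Ex1.prems in auto)
  then show ?case by simp
next
  case (Ex2 x1 x2)
  have "\<And>U. sat G \<nu> (\<sigma>(x1:=U)) x2 = sat G \<nu>' (\<sigma>'(x1:=U)) x2"
    by (rule Ex2.IH) (use Ex2.prems in auto)
  then show ?case by simp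
next
  case (SVar x)
  then show ?case by auto
next
  case (SConst x)
  have "\<And>u. sat G (\<nu>(0:=u)) \<sigma> x = sat G (\<nu>'(0:=u)) \<sigma>' x"
    by (rule SConst.IH) (use SConst.prems in \<open>auto simp: subset_iff\<close>)
  then show ?case by simp
qed

fun fsz :: "'a cmso \<Rightarrow> nat" and ssz :: "'a sterm \<Rightarrow> nat" where
  "fsz (Eq s t) = 1"
| "fsz (Lab a t) = 1"
| "fsz (Inc i s t) = 1"
| "fsz (Mem t S) = Suc (ssz S)"
| "fsz (CardMod S k m) = Suc (ssz S)"
| "fsz (Subset S T) = Suc (ssz S + ssz T)"
| "fsz (Single S) = Suc (ssz S)"
| "fsz (Neg \<phi>) = Suc (fsz \<phi>)"
| "fsz (Conj \<phi> \<psi>) = Suc (fsz \<phi> + fsz \<psi>)"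
| "fsz (cmso.Ex1 x \<phi>) = Suc (fsz \<phi>)"
| "fsz (Ex2 X \<phi>) = Suc (fsz \<phi>)"
| "ssz (SVar X) = 1"
| "ssz (SConst \<psi>) = Suc (fsz \<psi>)"

definition TT :: "'a cmso" where
  "TT = Subset (SConst (Eq (FVar 0) (FVar 0))) (SConst (Eq (FVar 0) (FVar 0)))"
definition FF :: "'a cmso" where "FF = Neg TT"

lemma TT_props[simp]: "sat G \<nu> \<sigma> TT" "fv1 TT = {}" "fv2 TT = {}" "qrank TT = 0" "ok Sig mx n M TT"
  by (auto simp: TT_def)
lemma FF_props[simp]: "\<not> sat G \<nu> \<sigma> FF" "fv1 FF = {}" "fv2 FF = {}" "qrank FF = 0" "ok Sig mx n M FF"
  by (auto simp: FF_def)

definition conjs :: "'a cmso list \<Rightarrow> 'a cmso" where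
  "conjs l = foldr Conj l TT"

lemma conjs_props:
  "sat G \<nu> \<sigma> (conjs l) \<longleftrightarrow> (\<forall>\<phi>\<in>set l. sat G \<nu> \<sigma> \<phi>)"
  "fv1 (conjs l) = (\<Union>\<phi>\<in>set l. fv1 \<phi>)"
  "fv2 (conjs l) = (\<Union>\<phi>\<in>set l. fv2 \<phi>)"
  "qrank (conjs l) \<le> k \<longleftrightarrow> (\<forall>\<phi>\<in>set l. qrank \<phi> \<le> k)"
  "ok Sig mx n M (conjs l) \<longleftrightarrow> (\<forall>\<phi>\<in>set l. ok Sig mx n M \<phi>)"
  by (induction l) (auto simp: conjs_def)

definition internal :: "'a hg \<Rightarrow> (nat + nat) set" where
  "internal G = univ G - Inl ` set (src G)"

definition idxE :: "nat list \<Rightarrow> nat \<Rightarrow> nat" where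
  "idxE E v = (THE l. l < length E \<and> E ! l = v)"

lemma idxE: "distinct E \<Longrightarrow> v \<in> set E \<Longrightarrow> idxE E v < length E \<and> E ! idxE E v = v"
  unfolding idxE_def by (rule theI') (auto simp: in_set_conv_nth distinct_Ex1)

lemma idxE_nth: "distinct E \<Longrightarrow> l < length E \<Longrightarrow> idxE E (E ! l) = l"
  using idxE[of E "E ! l"] nth_eq_iff_index_eq by (metis nth_mem)

definition glo :: "(nat + nat) set \<Rightarrow> (nat + nat \<Rightarrow> nat + nat) \<Rightarrow> nat list \<Rightarrow> 'a hg \<Rightarrow> nat + nat \<Rightarrow> (nat + nat) option" where
  "glo B dec E G w = (if w \<in> B then Some (dec w) else
     (case w of Inl v \<Rightarrow> if v \<in> set E then Some (Inl (src G ! idxE E v)) else None | Inr _ \<Rightarrow> None))"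

definition glue :: "'a hg \<Rightarrow> 'a hg \<Rightarrow> (nat + nat) set \<Rightarrow> (nat + nat \<Rightarrow> nat + nat) \<Rightarrow> nat list \<Rightarrow> bool" where
  "glue D G B dec E \<longleftrightarrow>
    finite (univ D) \<and> finite (univ G) \<and> B \<subseteq> univ D \<and> inj_on dec B \<and> dec ` B = internal G \<and>
    (\<forall>b\<in>B. isl (dec b) = isl b) \<and>
    length E = length (src G) \<and> distinct E \<and> distinct (src G) \<and> Inl ` set (src G) \<subseteq> univ G \<and>
    Inl ` set E \<subseteq> univ D - B \<and> Inl ` set (src D) \<inter> B = {} \<and>
    (\<forall>d. Inr d \<in> univ D - B \<longrightarrow> Inl ` set (inc D d) \<inter> B = {}) \<and>
    (\<forall>d. Inr d \<in> B \<longrightarrow> (\<exists>f. dec (Inr d) = Inr f \<and> f \<in> edges G \<and> lab D d = lab G f \<and>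
        length (inc D d) = length (inc G f) \<and>
        (\<forall>i<length (inc G f). glo B dec E G (Inl (inc D d ! i)) = Some (Inl (inc G f ! i)))))"

lemma glueD:
  assumes "glue D G B dec E"
  shows "finite (univ D)" "finite (univ G)" "B \<subseteq> univ D" "inj_on dec B" "dec ` B = internal G"
    "\<And>b. b\<in>B \<Longrightarrow> isl (dec b) = isl b"
    "length E = length (src G)" "distinct E" "distinct (src G)" "Inl ` set (src G) \<subseteq> univ G"
    "Inl ` set E \<subseteq> univ D - B" "Inl ` set (src D) \<inter> B = {}"
    "\<And>d. Inr d \<in> univ D - B \<Longrightarrow> Inl ` set (inc D d) \<inter> B = {}"
    "\<And>d. Inr d \<in> B \<Longrightarrow> (\<exists>f. dec (Inr d) = Inr f \<and> f \<in> edges G \<and> lab D d = lab G f \<and>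
        length (inc D d) = length (inc G f) \<and>
        (\<forall>i<length (inc G f). glo B dec E G (Inl (inc D d ! i)) = Some (Inl (inc G f ! i))))"
  using assms unfolding glue_def by simp_all

lemma glo_inj:
  assumes "glue D G B dec E" "glo B dec E G w1 = Some g" "glo B dec E G w2 = Some g"
  shows "w1 = w2"
proof -
  have g: "inj_on dec B" "dec ` B = internal G" "distinct E" "distinct (src G)" "length E = length (src G)"
    using glueD[OF assms(1)] by auto
  have srcint: "\<And>b l. b \<in> B \<Longrightarrow> l < length (src G) \<Longrightarrow> dec b \<noteq> Inl (src G ! l)"
    using g(2) unfolding internal_def by force
  show ?thesis
  proof (cases "w1 \<in> B")
    case True
    then show ?thesis using assms(2,3) g srcint idxE[of E]
      by (auto simp: glo_def inj_on_def split: sum.splits if_splits; metis)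
  next
    case False
    then show ?thesis using assms(2,3) g srcint idxE[of E]
      by (auto simp: glo_def inj_on_def nth_eq_iff_index_eq split: sum.splits if_splits; metis)
  qed
qed

lemma glue_edge:
  assumes "glue D G B dec E" "Inr d \<in> B"
  obtains f where "dec (Inr d) = Inr f" "f \<in> edges G" "lab D d = lab G f" "length (inc D d) = length (inc G f)"
    "\<And>i w. i < length (inc G f) \<Longrightarrow> (w = Inl (inc D d ! i)) \<longleftrightarrow> glo B dec E G w = Some (Inl (inc G f ! i))"
proof -
  obtain f where f: "dec (Inr d) = Inr f" "f \<in> edges G" "lab D d = lab G f" "length (inc D d) = length (inc G f)"
    "\<And>i. i<length (inc G f) \<Longrightarrow> glo B dec E G (Inl (inc D d ! i)) = Some (Inl (inc G f ! i))"
    using glueD(14)[OF assms] by blast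
  show ?thesis
  proof (rule that[OF f(1-4)])
    fix i w assume i: "i < length (inc G f)"
    show "(w = Inl (inc D d ! i)) \<longleftrightarrow> glo B dec E G w = Some (Inl (inc G f ! i))"
      using f(5)[OF i] glo_inj[OF assms(1), of w _ "Inl (inc D d ! i)"] by auto
  qed
qed

definition sameA :: "'a hg \<Rightarrow> (nat + nat) set \<Rightarrow> 'a hg \<Rightarrow> (nat + nat) set \<Rightarrow> bool" where
  "sameA D B D' B' \<longleftrightarrow> univ D - B = univ D' - B' \<and> src D = src D' \<and>
     (\<forall>d. Inr d \<in> univ D - B \<longrightarrow> lab D d = lab D' d \<and> inc D d = inc D' d)"

definition gnu :: "(nat + nat \<Rightarrow> nat + nat) \<Rightarrow> (nat + nat) set \<Rightarrow> (nat \<Rightarrow> nat + nat) \<Rightarrow> nat \<Rightarrow> nat + nat" where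
  "gnu dec B \<nu> = (\<lambda>x. if \<nu> x \<in> B then dec (\<nu> x) else Inl 0)"

definition gset :: "'a hg \<Rightarrow> (nat + nat \<Rightarrow> nat + nat) \<Rightarrow> (nat + nat) set \<Rightarrow> nat list \<Rightarrow> (nat + nat) set \<Rightarrow> (nat + nat) set" where
  "gset G dec B E P = dec ` (P \<inter> B) \<union> {Inl (src G ! l) | l. l < length E \<and> Inl (E ! l) \<in> P}"

definition csub :: "nat list \<Rightarrow> nat list \<Rightarrow> nat \<Rightarrow> nat option" where
  "csub srcD E j = (if srcD ! (j - 1) \<in> set E then Some (Suc (idxE E (srcD ! (j - 1)))) else None)"

primrec tr :: "('a cmso \<Rightarrow> bool) \<Rightarrow> (nat \<Rightarrow> nat option) \<Rightarrow> 'a cmso \<Rightarrow> 'a cmso"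
  and trs :: "('a cmso \<Rightarrow> bool) \<Rightarrow> (nat \<Rightarrow> nat option) \<Rightarrow> 'a sterm \<Rightarrow> 'a sterm" where
  "tr Or cs (Eq s t) = (case s of FVar x \<Rightarrow> (case t of FVar y \<Rightarrow> Eq (FVar x) (FVar y) | Cst j \<Rightarrow> FF)
                     | Cst i \<Rightarrow> (case t of FVar y \<Rightarrow> FF | Cst j \<Rightarrow> if Or (Eq s t) then TT else FF))"
| "tr Or cs (Lab a t) = (case t of FVar x \<Rightarrow> Lab a (FVar x) | Cst j \<Rightarrow> FF)"
| "tr Or cs (Inc i s t) = (case s of Cst j \<Rightarrow> FF | FVar x \<Rightarrow>
      (case t of FVar y \<Rightarrow> Inc i (FVar x) (FVar y)
       | Cst j \<Rightarrow> (case cs j of Some l \<Rightarrow> Inc i (FVar x) (Cst l) | None \<Rightarrow> FF)))"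
| "tr Or cs (Mem t S) = (case t of FVar x \<Rightarrow> Mem (FVar x) (trs Or cs S)
      | Cst j \<Rightarrow> if Or (Mem t S) then TT else FF)"
| "tr Or cs (CardMod S k m) = (if Or (CardMod S k m) then TT else FF)"
| "tr Or cs (Subset S T) = (if Or (Subset S T) then TT else FF)"
| "tr Or cs (Single S) = (if Or (Single S) then TT else FF)"
| "tr Or cs (Neg \<phi>) = Neg (tr Or cs \<phi>)"
| "tr Or cs (Conj \<phi> \<psi>) = Conj (tr Or cs \<phi>) (tr Or cs \<psi>)"
| "tr Or cs (cmso.Ex1 x \<phi>) = FF"
| "tr Or cs (Ex2 X \<phi>) = FF"
| "trs Or cs (SVar X) = SVar X"
| "trs Or cs (SConst \<psi>) = SConst (tr Or cs \<psi>)"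

lemma tr_props:
  assumes cs: "\<And>j l. cs j = Some l \<Longrightarrow> 1 \<le> l \<and> l \<le> n"
  shows "qrank \<phi> = 0 \<Longrightarrow> ok Sig mx n' M \<phi> \<Longrightarrow> ok Sig mx n M (tr Or cs \<phi>) \<and> qrank (tr Or cs \<phi>) = 0 \<and> fv1 (tr Or cs \<phi>) \<subseteq> fv1 \<phi> \<and> fv2 (tr Or cs \<phi>) \<subseteq> fv2 \<phi>"
    "ok_s Sig mx n' M S \<Longrightarrow> ok_s Sig mx n M (trs Or cs S) \<and> fv2_s (trs Or cs S) \<subseteq> fv2_s S \<and> fv1_s (trs Or cs S) = {}"
proof (induction \<phi> and S rule: cmso.induct sterm.induct)
  case (Eq x1 x2)
  then show ?case by (simp split: fterm.splits)
next
  case (Lab x1 x2)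
  then show ?case by (simp split: fterm.splits)
next
  case (Inc x1 x2 x3)
  then show ?case using cs by (simp split: fterm.splits option.splits)
next
  case (Mem x1 x2)
  then show ?case by (simp split: fterm.splits)
next
  case (CardMod x1 x2 x3)
  then show ?case by simp
next
  case (Subset x1 x2)
  then show ?case by simp
next
  case (Single x)
  then show ?case by simp
next
  case (Neg x)
  then show ?case by simp
next
  case (Conj x1 x2)
  then show ?case by auto
next
  case (Ex1 x1 x2)
  then show ?case by simp
next
  case (Ex2 x1 x2)
  then show ?case by simp
next
  case (SVar x)
  then show ?case by simp
next
  case (SConst x)
  then show ?case by auto
qed


lemma glue_univ_int: "glue D G B dec E \<Longrightarrow> b \<in> B \<Longrightarrow> dec b \<in> univ G \<and> dec b \<in> internal G"
  using glueD(5)[of D G B dec E] unfolding internal_def by blast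

lemma src_notB: "glue D G B dec E \<Longrightarrow> 1 \<le> j \<Longrightarrow> j \<le> length (src D) \<Longrightarrow> Inl (src D ! (j - 1)) \<notin> B"
proof -
  assume a: "glue D G B dec E" "1 \<le> j" "j \<le> length (src D)"
  then have "src D ! (j - 1) \<in> set (src D)" by (intro nth_mem) simp
  then show ?thesis using glueD(12)[OF a(1)] by blast
qed

lemma fv1_s_empty[simp]: "fv1_s S = {}"
  by (cases S) auto

lemma tr_correct:
  assumes gl: "glue D G B dec E"
  and cs: "cs = csub (src D) E"
  and Ocond: "\<And>\<chi> \<nu> \<sigma>. ok Sig mx (length (src D)) M \<chi> \<Longrightarrow> qrank \<chi> = 0 \<Longrightarrow> fv1 \<chi> = {} \<Longrightarrow> fv2 \<chi> = {} \<Longrightarrow> fsz \<chi> < N \<Longrightarrow> Or \<chi> = sat D \<nu> \<sigma> \<chi>"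
  shows "ok Sig mx (length (src D)) M \<phi> \<Longrightarrow> qrank \<phi> = 0 \<Longrightarrow> fv2 \<phi> = {} \<Longrightarrow> fsz \<phi> < N \<Longrightarrow>
           (\<forall>x\<in>fv1 \<phi>. \<nu> x \<in> B \<and> g\<nu> x = dec (\<nu> x)) \<Longrightarrow> sat D \<nu> \<sigma> \<phi> = sat G g\<nu> g\<sigma> (tr Or cs \<phi>)"
    "ok_s Sig mx (length (src D)) M S \<Longrightarrow> fv2_s S = {} \<Longrightarrow> ssz S < N \<Longrightarrow> u \<in> B \<Longrightarrow>
           (u \<in> seval D \<nu> \<sigma> S) = (dec u \<in> seval G g\<nu> g\<sigma> (trs Or cs S))"
proof (induction \<phi> and S arbitrary: \<nu> g\<nu> \<sigma> g\<sigma> and \<nu> g\<nu> \<sigma> g\<sigma> u rule: cmso.induct sterm.induct)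
  case (Eq s t)
  show ?case
  proof (cases s)
    case (FVar x)
    show ?thesis
    proof (cases t)
      case (FVar y)
      with \<open>s = FVar x\<close> Eq.prems show ?thesis using glueD(4)[OF gl] by (auto simp: inj_on_def)
    next
      case (Cst j)
      with \<open>s = FVar x\<close> Eq.prems show ?thesis using src_notB[OF gl, of j] by auto
    qed
  next
    case (Cst i)
    show ?thesis
    proof (cases t)
      case (FVar y)
      with \<open>s = Cst i\<close> Eq.prems show ?thesis using src_notB[OF gl, of i] by auto
    next
      case (Cst j)
      with \<open>s = Cst i\<close> Eq.prems show ?thesis using Ocond[of "Eq s t"] by auto
    qed
  qed
next
  case (Lab a t)
  show ?case
  proof (cases t)
    case (FVar x)
    have xB: "\<nu> x \<in> B" "g\<nu> x = dec (\<nu> x)" using Lab.prems FVar by auto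
    show ?thesis
    proof (cases "\<nu> x")
      case (Inl v)
      then show ?thesis using xB glueD(6)[OF gl, of "\<nu> x"] FVar by (auto split: sum.splits)
    next
      case (Inr d)
      obtain f where f: "dec (Inr d) = Inr f" "f \<in> edges G" "lab D d = lab G f"
        using glue_edge[OF gl, of d] xB Inr by metis
      have "d \<in> edges D" using xB Inr glueD(3)[OF gl] by (auto simp: univ_def)
      then show ?thesis using f xB Inr FVar by auto
    qed
  next
    case (Cst j)
    then show ?thesis by simp
  qed
next
  case (Inc i s t)
  show ?case
  proof (cases s)
    case (Cst j)
    then show ?thesis by simp
  next
    case (FVar x)
    have xB: "\<nu> x \<in> B" "g\<nu> x = dec (\<nu> x)" using Inc.prems FVar by auto
    show ?thesis
    proof (cases "\<nu> x")
      case (Inl v)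
      then have "isl (g\<nu> x)" using xB glueD(6)[OF gl, of "\<nu> x"] by auto
      then show ?thesis using Inl FVar by (cases t; auto split: option.splits sum.splits)
    next
      case (Inr d)
      obtain f where f: "dec (Inr d) = Inr f" "f \<in> edges G" "length (inc D d) = length (inc G f)"
        "\<And>i w. i < length (inc G f) \<Longrightarrow> (w = Inl (inc D d ! i)) \<longleftrightarrow> glo B dec E G w = Some (Inl (inc G f ! i))"
        using glue_edge[OF gl, of d] xB Inr by metis
      have dD: "d \<in> edges D" using xB Inr glueD(3)[OF gl] by (auto simp: univ_def)
      have L: "sat D \<nu> \<sigma> (Inc i s t) \<longleftrightarrow> 1 \<le> i \<and> i \<le> length (inc G f) \<and>
                  glo B dec E G (tval D \<nu> t) = Some (Inl (inc G f ! (i - 1)))"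
        using f(3) f(4)[of "i - 1" "tval D \<nu> t"] dD Inr FVar by auto
      show ?thesis
      proof (cases t)
        case (FVar y)
        have yB: "\<nu> y \<in> B" "g\<nu> y = dec (\<nu> y)" using Inc.prems FVar \<open>s = FVar x\<close> by auto
        have "glo B dec E G (tval D \<nu> t) = Some (g\<nu> y)" using yB FVar by (simp add: glo_def)
        then show ?thesis using L f(1,2) xB Inr FVar \<open>s = FVar x\<close> by auto
      next
        case (Cst j)
        have j: "1 \<le> j" "j \<le> length (src D)" using Inc.prems Cst by auto
        have nB: "Inl (src D ! (j - 1)) \<notin> B" using src_notB[OF gl j] .
        show ?thesis
        proof (cases "src D ! (j - 1) \<in> set E")
          case True
          have "glo B dec E G (tval D \<nu> t) = Some (Inl (src G ! idxE E (src D ! (j - 1))))"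
            using nB True Cst by (simp add: glo_def)
          then show ?thesis using L f(1,2) xB Inr Cst \<open>s = FVar x\<close> True cs by (auto simp: csub_def)
        next
          case False
          have "glo B dec E G (tval D \<nu> t) = None"
            using nB False Cst by (simp add: glo_def)
          then show ?thesis using L Cst \<open>s = FVar x\<close> False cs by (auto simp: csub_def)
        qed
      qed
    qed
  qed
next
  case (Mem t S)
  show ?case
  proof (cases t)
    case (FVar x)
    have xB: "\<nu> x \<in> B" "g\<nu> x = dec (\<nu> x)" using Mem.prems FVar by auto
    have "(\<nu> x \<in> seval D \<nu> \<sigma> S) = (dec (\<nu> x) \<in> seval G g\<nu> g\<sigma> (trs Or cs S))"
      by (rule Mem.IH) (use Mem.prems xB in auto)
    then show ?thesis using FVar xB by simp
  next
    case (Cst j)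
    then show ?thesis using Mem.prems Ocond[of "Mem t S"] by auto
  qed
next
  case (CardMod S k m)
  then show ?case using Ocond[of "CardMod S k m"] by auto
next
  case (Subset S T)
  then show ?case using Ocond[of "Subset S T"] by auto
next
  case (Single S)
  then show ?case using Ocond[of "Single S"] by auto
next
  case (Neg \<phi>)
  then show ?case by auto
next
  case (Conj \<phi> \<psi>)
  have "sat D \<nu> \<sigma> \<phi> = sat G g\<nu> g\<sigma> (tr Or cs \<phi>)" by (rule Conj.IH) (use Conj.prems in auto)
  moreover have "sat D \<nu> \<sigma> \<psi> = sat G g\<nu> g\<sigma> (tr Or cs \<psi>)" by (rule Conj.IH) (use Conj.prems in auto)
  ultimately show ?case by simp
next
  case (Ex1 x \<phi>)
  then show ?case by simp
next
  case (Ex2 X \<phi>)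
  then show ?case by simp
next
  case (SVar X)
  then show ?case by simp
next
  case (SConst \<psi>)
  have u: "u \<in> univ D" "dec u \<in> univ G" using SConst.prems glueD(3)[OF gl] glue_univ_int[OF gl] by auto
  have "sat D (\<nu>(0 := u)) \<sigma> \<psi> = sat G (g\<nu>(0 := dec u)) g\<sigma> (tr Or cs \<psi>)"
    by (rule SConst.IH) (use SConst.prems in auto)
  then show ?case using u by simp
qed


definition rel :: "'a set \<Rightarrow> nat \<Rightarrow> nat set \<Rightarrow> nat \<Rightarrow> nat set \<Rightarrow> 'a hg \<Rightarrow> (nat + nat) set \<Rightarrow> (nat + nat \<Rightarrow> nat + nat)
   \<Rightarrow> 'a hg \<Rightarrow> (nat + nat) set \<Rightarrow> (nat + nat \<Rightarrow> nat + nat) \<Rightarrow> nat list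
   \<Rightarrow> (nat \<Rightarrow> nat + nat) \<Rightarrow> (nat \<Rightarrow> (nat + nat) set) \<Rightarrow> (nat \<Rightarrow> nat + nat) \<Rightarrow> (nat \<Rightarrow> (nat + nat) set) \<Rightarrow> bool" where
  "rel Sig mx M k W G B dec G' B' dec' E \<nu> \<sigma> \<nu>' \<sigma>' \<longleftrightarrow>
    (\<forall>x. \<nu> x \<notin> B \<longrightarrow> \<nu>' x = \<nu> x) \<and> (\<forall>x. \<nu> x \<in> B \<longleftrightarrow> \<nu>' x \<in> B') \<and> (\<forall>X. \<sigma> X - B = \<sigma>' X - B') \<and>
    (\<forall>\<phi>. ok Sig mx (length (src G)) M \<phi> \<and> qrank \<phi> \<le> k \<and> fv1 \<phi> \<subseteq> {x. \<nu> x \<in> B} \<and> fv2 \<phi> \<subseteq> W \<longrightarrow>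
       (sat G (gnu dec B \<nu>) (\<lambda>X. gset G dec B E (\<sigma> X)) \<phi> \<longleftrightarrow>
        sat G' (gnu dec' B' \<nu>') (\<lambda>X. gset G' dec' B' E (\<sigma>' X)) \<phi>))"

lemma relD:
  assumes "rel Sig mx M k W G B dec G' B' dec' E \<nu> \<sigma> \<nu>' \<sigma>'"
  shows "\<And>x. \<nu> x \<notin> B \<Longrightarrow> \<nu>' x = \<nu> x" "\<And>x. \<nu> x \<in> B \<longleftrightarrow> \<nu>' x \<in> B'" "\<And>X. \<sigma> X - B = \<sigma>' X - B'"
    "\<And>\<phi>. ok Sig mx (length (src G)) M \<phi> \<Longrightarrow> qrank \<phi> \<le> k \<Longrightarrow> fv1 \<phi> \<subseteq> {x. \<nu> x \<in> B} \<Longrightarrow> fv2 \<phi> \<subseteq> W \<Longrightarrow>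
       (sat G (gnu dec B \<nu>) (\<lambda>X. gset G dec B E (\<sigma> X)) \<phi> \<longleftrightarrow>
        sat G' (gnu dec' B' \<nu>') (\<lambda>X. gset G' dec' B' E (\<sigma>' X)) \<phi>)"
proof -
  note h = assms[unfolded rel_def]
  show "\<And>x. \<nu> x \<notin> B \<Longrightarrow> \<nu>' x = \<nu> x" using h by blast
  show "\<And>x. \<nu> x \<in> B \<longleftrightarrow> \<nu>' x \<in> B'" using h by blast
  show "\<And>X. \<sigma> X - B = \<sigma>' X - B'" using h by blast
  show "\<And>\<phi>. ok Sig mx (length (src G)) M \<phi> \<Longrightarrow> qrank \<phi> \<le> k \<Longrightarrow> fv1 \<phi> \<subseteq> {x. \<nu> x \<in> B} \<Longrightarrow> fv2 \<phi> \<subseteq> W \<Longrightarrow>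
       (sat G (gnu dec B \<nu>) (\<lambda>X. gset G dec B E (\<sigma> X)) \<phi> \<longleftrightarrow>
        sat G' (gnu dec' B' \<nu>') (\<lambda>X. gset G' dec' B' E (\<sigma>' X)) \<phi>)" using h by blast
qed

lemma rel_sym:
  assumes R: "rel Sig mx M k W G B dec G' B' dec' E \<nu> \<sigma> \<nu>' \<sigma>'" and n: "length (src G) = length (src G')"
  shows "rel Sig mx M k W G' B' dec' G B dec E \<nu>' \<sigma>' \<nu> \<sigma>"
  unfolding rel_def
proof (intro conjI allI impI)
  fix x assume "\<nu>' x \<notin> B'"
  then have "\<nu> x \<notin> B" using relD(2)[OF R] by simp
  then show "\<nu> x = \<nu>' x" using relD(1)[OF R] by simp
next
  fix x show "\<nu>' x \<in> B' \<longleftrightarrow> \<nu> x \<in> B" using relD(2)[OF R] by simp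
next
  fix X show "\<sigma>' X - B' = \<sigma> X - B" using relD(3)[OF R] by simp
next
  fix \<phi> assume a: "ok Sig mx (length (src G')) M \<phi> \<and> qrank \<phi> \<le> k \<and> fv1 \<phi> \<subseteq> {x. \<nu>' x \<in> B'} \<and> fv2 \<phi> \<subseteq> W"
  have "{x. \<nu>' x \<in> B'} = {x. \<nu> x \<in> B}" using relD(2)[OF R] by simp
  then show "sat G' (gnu dec' B' \<nu>') (\<lambda>X. gset G' dec' B' E (\<sigma>' X)) \<phi> =
         sat G (gnu dec B \<nu>) (\<lambda>X. gset G dec B E (\<sigma> X)) \<phi>"
    using relD(4)[OF R, of \<phi>] a n by simp
qed

lemma rel_mono:
  assumes R: "rel Sig mx M k W G B dec G' B' dec' E \<nu> \<sigma> \<nu>' \<sigma>'" and k: "k' \<le> k"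
  shows "rel Sig mx M k' W G B dec G' B' dec' E \<nu> \<sigma> \<nu>' \<sigma>'"
  unfolding rel_def
proof (intro conjI allI impI)
  fix \<phi> assume a: "ok Sig mx (length (src G)) M \<phi> \<and> qrank \<phi> \<le> k' \<and> fv1 \<phi> \<subseteq> {x. \<nu> x \<in> B} \<and> fv2 \<phi> \<subseteq> W"
  then show "sat G (gnu dec B \<nu>) (\<lambda>X. gset G dec B E (\<sigma> X)) \<phi> =
         sat G' (gnu dec' B' \<nu>') (\<lambda>X. gset G' dec' B' E (\<sigma>' X)) \<phi>"
    using relD(4)[OF R, of \<phi>] k by simp
qed (use relD(1-3)[OF R] in auto)

lemma gnu_upd_notB: "u \<notin> B \<Longrightarrow> y \<noteq> x \<Longrightarrow> gnu dec B (\<nu>(x := u)) y = gnu dec B \<nu> y"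
  by (simp add: gnu_def)

lemma gnu_upd_B: "u \<in> B \<Longrightarrow> gnu dec B (\<nu>(x := u)) = (gnu dec B \<nu>)(x := dec u)"
  by (auto simp: gnu_def)

lemma rel_updA:
  assumes R: "rel Sig mx M k W G B dec G' B' dec' E \<nu> \<sigma> \<nu>' \<sigma>'" and u: "u \<notin> B" "u \<notin> B'"
  shows "rel Sig mx M k W G B dec G' B' dec' E (\<nu>(x := u)) \<sigma> (\<nu>'(x := u)) \<sigma>'"
  unfolding rel_def
proof (intro conjI allI impI)
  fix \<phi> assume a: "ok Sig mx (length (src G)) M \<phi> \<and> qrank \<phi> \<le> k \<and> fv1 \<phi> \<subseteq> {y. (\<nu>(x := u)) y \<in> B} \<and> fv2 \<phi> \<subseteq> W"
  then have fv: "fv1 \<phi> \<subseteq> {y. \<nu> y \<in> B}" "x \<notin> fv1 \<phi>" using u by (auto split: if_splits)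
  have fv': "fv1 \<phi> \<subseteq> {y. \<nu>' y \<in> B'}" using fv relD(2)[OF R] by auto
  have "sat G (gnu dec B (\<nu>(x := u))) (\<lambda>X. gset G dec B E (\<sigma> X)) \<phi> = sat G (gnu dec B \<nu>) (\<lambda>X. gset G dec B E (\<sigma> X)) \<phi>"
    using a fv by (intro coinc(1)[of Sig mx "length (src G)" M]) (auto simp: gnu_def)
  also have "\<dots> = sat G' (gnu dec' B' \<nu>') (\<lambda>X. gset G' dec' B' E (\<sigma>' X)) \<phi>"
    using relD(4)[OF R] a fv by auto
  also have "\<dots> = sat G' (gnu dec' B' (\<nu>'(x := u))) (\<lambda>X. gset G' dec' B' E (\<sigma>' X)) \<phi>"
    using a fv fv' by (intro coinc(1)[of Sig mx "length (src G)" M]) (auto simp: gnu_def)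
  finally show "sat G (gnu dec B (\<nu>(x := u))) (\<lambda>X. gset G dec B E (\<sigma> X)) \<phi> =
    sat G' (gnu dec' B' (\<nu>'(x := u))) (\<lambda>X. gset G' dec' B' E (\<sigma>' X)) \<phi>" .
qed (use relD[OF R] u in auto)

lemma NS_sat:
  "sat H \<nu> \<sigma> (conjs (map (\<lambda>j. Neg (Eq (FVar x) (Cst (Suc j)))) [0..<length (src H)])) \<longleftrightarrow> \<nu> x \<notin> Inl ` set (src H)"
  by (auto simp: conjs_props in_set_conv_nth; force)

lemma NS_props:
  "ok Sig mx n M (conjs (map (\<lambda>j. Neg (Eq (FVar x) (Cst (Suc j)))) [0..<n]))"
  "qrank (conjs (map (\<lambda>j. Neg (Eq (FVar x) (Cst (Suc j)))) [0..<n])) \<le> k"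
  "fv1 (conjs (map (\<lambda>j. Neg (Eq (FVar x) (Cst (Suc j)))) [0..<n])) \<subseteq> {x}"
  "fv2 (conjs (map (\<lambda>j. Neg (Eq (FVar x) (Cst (Suc j)))) [0..<n])) = {}"
  by (auto simp: conjs_props)

lemma internal_univ: "internal G \<subseteq> univ G" by (auto simp: internal_def)

lemma rel_updB:
  assumes R: "rel Sig mx M (Suc k) W G B dec G' B' dec' E \<nu> \<sigma> \<nu>' \<sigma>'"
    and gl: "glue D G B dec E" and gl': "glue D' G' B' dec' E" and u: "u \<in> B"
  shows "\<exists>u'\<in>B'. rel Sig mx M k W G B dec G' B' dec' E (\<nu>(x := u)) \<sigma> (\<nu>'(x := u')) \<sigma>'"
proof (rule ccontr)
  define n where "n = length (src G)"
  have n': "length (src G') = n" using glueD(7)[OF gl] glueD(7)[OF gl'] n_def by simp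
  define g\<nu> where "g\<nu> = gnu dec B \<nu>"
  define g\<nu>' where "g\<nu>' = gnu dec' B' \<nu>'"
  define g\<sigma> where "g\<sigma> = (\<lambda>X. gset G dec B E (\<sigma> X))"
  define g\<sigma>' where "g\<sigma>' = (\<lambda>X. gset G' dec' B' E (\<sigma>' X))"
  define P where "P = (\<lambda>\<phi>. ok Sig mx n M \<phi> \<and> qrank \<phi> \<le> k \<and> fv1 \<phi> \<subseteq> insert x {y. \<nu> y \<in> B} \<and> fv2 \<phi> \<subseteq> W)"
  assume na: "\<not> (\<exists>u'\<in>B'. rel Sig mx M k W G B dec G' B' dec' E (\<nu>(x := u)) \<sigma> (\<nu>'(x := u')) \<sigma>')"
  have ex: "\<exists>\<phi>. P \<phi> \<and> sat G (g\<nu>(x := dec u)) g\<sigma> \<phi> \<and> \<not> sat G' (g\<nu>'(x := g')) g\<sigma>' \<phi>"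
    if g': "g' \<in> internal G'" for g'
  proof -
    have "g' \<in> dec' ` B'" using g' glueD(5)[OF gl'] by simp
    then obtain u' where u': "u' \<in> B'" "dec' u' = g'" by (metis imageE)
    have "\<not> rel Sig mx M k W G B dec G' B' dec' E (\<nu>(x := u)) \<sigma> (\<nu>'(x := u')) \<sigma>'"
    proof
      assume h: "rel Sig mx M k W G B dec G' B' dec' E (\<nu>(x := u)) \<sigma> (\<nu>'(x := u')) \<sigma>'"
      have "\<exists>u'\<in>B'. rel Sig mx M k W G B dec G' B' dec' E (\<nu>(x := u)) \<sigma> (\<nu>'(x := u')) \<sigma>'"
        using h u'(1) by (rule bexI)
      with na show False by contradiction
    qed
    moreover have "(\<forall>y. (\<nu>(x := u)) y \<notin> B \<longrightarrow> (\<nu>'(x := u')) y = (\<nu>(x := u)) y) \<and>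
      (\<forall>y. (\<nu>(x := u)) y \<in> B \<longleftrightarrow> (\<nu>'(x := u')) y \<in> B') \<and> (\<forall>X. \<sigma> X - B = \<sigma>' X - B')"
      using relD(1-3)[OF R] u u' by auto
    ultimately obtain \<phi> where \<phi>: "ok Sig mx n M \<phi>" "qrank \<phi> \<le> k" "fv1 \<phi> \<subseteq> {y. (\<nu>(x := u)) y \<in> B}" "fv2 \<phi> \<subseteq> W"
      "\<not> (sat G (gnu dec B (\<nu>(x := u))) g\<sigma> \<phi> \<longleftrightarrow> sat G' (gnu dec' B' (\<nu>'(x := u'))) g\<sigma>' \<phi>)"
      unfolding rel_def n_def g\<sigma>_def g\<sigma>'_def by blast
    have Pphi: "P \<phi>" "P (Neg \<phi>)" using \<phi>(1-4) u unfolding P_def by (auto split: if_splits)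
    have e: "\<not> (sat G (g\<nu>(x := dec u)) g\<sigma> \<phi> \<longleftrightarrow> sat G' (g\<nu>'(x := g')) g\<sigma>' \<phi>)"
      using \<phi>(5) gnu_upd_B[of u B dec \<nu> x] gnu_upd_B[of u' B' dec' \<nu>' x] u u' g\<nu>_def g\<nu>'_def by simp
    show ?thesis
    proof (cases "sat G (g\<nu>(x := dec u)) g\<sigma> \<phi>")
      case True then show ?thesis using e Pphi by blast
    next
      case False then show ?thesis using e Pphi by (intro exI[of _ "Neg \<phi>"]) auto
    qed
  qed
  then obtain ch where ch: "\<And>g'. g' \<in> internal G' \<Longrightarrow> P (ch g') \<and> sat G (g\<nu>(x := dec u)) g\<sigma> (ch g') \<and> \<not> sat G' (g\<nu>'(x := g')) g\<sigma>' (ch g')"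
    by metis
  have "finite (internal G')" using glueD(2)[OF gl'] internal_univ finite_subset by blast
  then obtain l where l: "set l = internal G'" using finite_list by blast
  define NS :: "'a cmso" where "NS = conjs (map (\<lambda>j. Neg (Eq (FVar x) (Cst (Suc j)))) [0..<n])"
  define \<Psi> where "\<Psi> = Conj NS (conjs (map ch l))"
  have PPsi: "ok Sig mx n M (cmso.Ex1 x \<Psi>)" "qrank (cmso.Ex1 x \<Psi>) \<le> Suc k" "fv1 (cmso.Ex1 x \<Psi>) \<subseteq> {y. \<nu> y \<in> B}" "fv2 (cmso.Ex1 x \<Psi>) \<subseteq> W"
    using ch l NS_props unfolding \<Psi>_def NS_def P_def by (auto simp: conjs_props)
  have du: "dec u \<in> univ G" "dec u \<in> internal G" using glue_univ_int[OF gl u] by auto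
  have "sat G g\<nu> g\<sigma> (cmso.Ex1 x \<Psi>)"
  proof -
    have "sat G (g\<nu>(x := dec u)) g\<sigma> NS" unfolding NS_def n_def using NS_sat[of G "g\<nu>(x := dec u)" g\<sigma> x] du
      by (auto simp: internal_def)
    moreover have "sat G (g\<nu>(x := dec u)) g\<sigma> (conjs (map ch l))" using ch l by (auto simp: conjs_props)
    ultimately show ?thesis using du unfolding \<Psi>_def by auto
  qed
  then have "sat G' g\<nu>' g\<sigma>' (cmso.Ex1 x \<Psi>)"
    using relD(4)[OF R] PPsi unfolding g\<nu>_def g\<nu>'_def g\<sigma>_def g\<sigma>'_def n_def by blast
  then obtain g'' where g'': "g'' \<in> univ G'" "sat G' (g\<nu>'(x := g'')) g\<sigma>' NS" "sat G' (g\<nu>'(x := g'')) g\<sigma>' (conjs (map ch l))"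
    unfolding \<Psi>_def by auto
  have "g'' \<in> internal G'" using g''(1,2) NS_sat[of G' "g\<nu>'(x := g'')" g\<sigma>' x] n' unfolding NS_def internal_def by auto
  then show False using g''(3) ch l by (auto simp: conjs_props)
qed


lemma gset_sub: "glue D G B dec E \<Longrightarrow> gset G dec B E P \<subseteq> univ G"
proof -
  assume gl: "glue D G B dec E"
  have "dec ` (P \<inter> B) \<subseteq> univ G" using glue_univ_int[OF gl] by blast
  moreover have "{Inl (src G ! l) | l. l < length E \<and> Inl (E ! l) \<in> P} \<subseteq> univ G"
    using glueD(7,10)[OF gl] by (auto intro!: nth_mem)
  ultimately show ?thesis unfolding gset_def by blast
qed

lemma dec_not_src: "glue D G B dec E \<Longrightarrow> b \<in> B \<Longrightarrow> dec b \<notin> Inl ` set (src G)"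
  using glue_univ_int[of D G B dec E b] unfolding internal_def by blast

lemma gset_src:
  assumes gl: "glue D G B dec E" and l: "l < length E"
  shows "Inl (src G ! l) \<in> gset G dec B E P \<longleftrightarrow> Inl (E ! l) \<in> P"
proof
  assume "Inl (src G ! l) \<in> gset G dec B E P"
  moreover have "Inl (src G ! l) \<notin> dec ` (P \<inter> B)"
    using dec_not_src[OF gl] l glueD(7)[OF gl] by (metis IntD2 image_eqI imageE nth_mem)
  ultimately obtain l' where "src G ! l = src G ! l'" "l' < length E" "Inl (E ! l') \<in> P"
    unfolding gset_def by blast
  then show "Inl (E ! l) \<in> P" using l glueD(7,9)[OF gl] by (metis nth_eq_iff_index_eq)
qed (use l in \<open>auto simp: gset_def\<close>)

lemma gset_B:
  assumes gl: "glue D G B dec E" and b: "b \<in> B"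
  shows "dec b \<in> gset G dec B E P \<longleftrightarrow> b \<in> P"
proof
  assume "dec b \<in> gset G dec B E P"
  moreover have "dec b \<notin> {Inl (src G ! l) | l. l < length E \<and> Inl (E ! l) \<in> P}"
    using dec_not_src[OF gl b] glueD(7)[OF gl] by auto
  ultimately have "dec b \<in> dec ` (P \<inter> B)" unfolding gset_def by blast
  then show "b \<in> P" using glueD(4)[OF gl] b by (auto simp: inj_on_def)
qed (use b in \<open>auto simp: gset_def\<close>)

lemma univ_split: "glue D G B dec E \<Longrightarrow> univ G = internal G \<union> Inl ` set (src G)"
  using glueD(10)[of D G B dec E] unfolding internal_def by blast

lemma conjs_upt: "sat H \<nu> \<sigma> (conjs (map f [0..<n])) \<longleftrightarrow> (\<forall>l<n. sat H \<nu> \<sigma> (f l))"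
  by (auto simp: conjs_props)

lemma SPf_sat:
  "sat H \<nu> \<sigma> (conjs (map (\<lambda>l. if Inl (E ! l) \<in> U then Mem (Cst (Suc l)) (SVar X) else Neg (Mem (Cst (Suc l)) (SVar X))) [0..<n]))
     \<longleftrightarrow> (\<forall>l<n. Inl (src H ! l) \<in> \<sigma> X \<longleftrightarrow> Inl (E ! l) \<in> U)"
proof -
  have "\<And>l. sat H \<nu> \<sigma> (if Inl (E ! l) \<in> U then Mem (Cst (Suc l)) (SVar X) else Neg (Mem (Cst (Suc l)) (SVar X)))
     \<longleftrightarrow> (Inl (src H ! l) \<in> \<sigma> X \<longleftrightarrow> Inl (E ! l) \<in> U)" by simp
  then show ?thesis unfolding conjs_upt by simp
qed

lemma SPf_props:
  "ok Sig mx n M (conjs (map (\<lambda>l. if Inl (E ! l) \<in> U then Mem (Cst (Suc l)) (SVar X) else Neg (Mem (Cst (Suc l)) (SVar X))) [0..<n]))"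
  "qrank (conjs (map (\<lambda>l. if Inl (E ! l) \<in> U then Mem (Cst (Suc l)) (SVar X) else Neg (Mem (Cst (Suc l)) (SVar X))) [0..<n])) \<le> k"
  "fv1 (conjs (map (\<lambda>l. if Inl (E ! l) \<in> U then Mem (Cst (Suc l)) (SVar X) else Neg (Mem (Cst (Suc l)) (SVar X))) [0..<n])) = {}"
  "fv2 (conjs (map (\<lambda>l. if Inl (E ! l) \<in> U then Mem (Cst (Suc l)) (SVar X) else Neg (Mem (Cst (Suc l)) (SVar X))) [0..<n])) \<subseteq> {X}"
  by (auto simp: conjs_props)

lemma rel_updSet:
  assumes R: "rel Sig mx M (Suc k) W G B dec G' B' dec' E \<nu> \<sigma> \<nu>' \<sigma>'"
    and gl: "glue D G B dec E" and gl': "glue D' G' B' dec' E" and sA: "univ D - B = univ D' - B'"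
    and U: "U \<subseteq> univ D"
  shows "\<exists>U'. U' \<subseteq> univ D' \<and> rel Sig mx M k (insert X W) G B dec G' B' dec' E \<nu> (\<sigma>(X := U)) \<nu>' (\<sigma>'(X := U'))"
proof -
  define n where "n = length (src G)"
  have nE: "length E = n" using glueD(7)[OF gl] n_def by simp
  have n': "length (src G') = n" using glueD(7)[OF gl] glueD(7)[OF gl'] n_def by simp
  define g\<nu> where "g\<nu> = gnu dec B \<nu>"
  define g\<nu>' where "g\<nu>' = gnu dec' B' \<nu>'"
  define g\<sigma> where "g\<sigma> = (\<lambda>X. gset G dec B E (\<sigma> X))"
  define g\<sigma>' where "g\<sigma>' = (\<lambda>X. gset G' dec' B' E (\<sigma>' X))"
  define UG where "UG = gset G dec B E U"
  define SP :: "'a hg \<Rightarrow> (nat + nat) set \<Rightarrow> bool" where "SP = (\<lambda>H Y. \<forall>l<n. Inl (src H ! l) \<in> Y \<longleftrightarrow> Inl (E ! l) \<in> U)"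
  define P where "P = (\<lambda>\<phi>. ok Sig mx n M \<phi> \<and> qrank \<phi> \<le> k \<and> fv1 \<phi> \<subseteq> {y. \<nu> y \<in> B} \<and> fv2 \<phi> \<subseteq> insert X W)"
  have claim: "\<exists>Y. Y \<subseteq> univ G' \<and> SP G' Y \<and> (\<forall>\<phi>. P \<phi> \<longrightarrow> (sat G g\<nu> (g\<sigma>(X := UG)) \<phi> \<longleftrightarrow> sat G' g\<nu>' (g\<sigma>'(X := Y)) \<phi>))"
  proof (rule ccontr)
    assume na: "\<not> ?thesis"
    define C where "C = {Y. Y \<subseteq> univ G' \<and> SP G' Y}"
    have ex: "\<exists>\<phi>. P \<phi> \<and> sat G g\<nu> (g\<sigma>(X := UG)) \<phi> \<and> \<not> sat G' g\<nu>' (g\<sigma>'(X := Y)) \<phi>" if Y: "Y \<in> C" for Y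
    proof -
      obtain \<phi> where \<phi>: "P \<phi>" "\<not> (sat G g\<nu> (g\<sigma>(X := UG)) \<phi> \<longleftrightarrow> sat G' g\<nu>' (g\<sigma>'(X := Y)) \<phi>)"
        using na Y unfolding C_def by blast
      have "P (Neg \<phi>)" using \<phi>(1) unfolding P_def by simp
      show ?thesis
      proof (cases "sat G g\<nu> (g\<sigma>(X := UG)) \<phi>")
        case True then show ?thesis using \<phi> by blast
      next
        case False
        then have "sat G g\<nu> (g\<sigma>(X := UG)) (Neg \<phi>) \<and> \<not> sat G' g\<nu>' (g\<sigma>'(X := Y)) (Neg \<phi>)" using \<phi>(2) by simp
        then show ?thesis using \<open>P (Neg \<phi>)\<close> by blast
      qed
    qed
    then obtain ch where ch: "\<And>Y. Y \<in> C \<Longrightarrow> P (ch Y) \<and> sat G g\<nu> (g\<sigma>(X := UG)) (ch Y) \<and> \<not> sat G' g\<nu>' (g\<sigma>'(X := Y)) (ch Y)"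
      by metis
    have "finite C" unfolding C_def using glueD(2)[OF gl'] by (simp add: finite_subset[of _ "Pow (univ G')"] subset_iff)
    then obtain l where l: "set l = C" using finite_list by blast
    define SPf :: "'a cmso" where "SPf = conjs (map (\<lambda>l. if Inl (E ! l) \<in> U then Mem (Cst (Suc l)) (SVar X) else Neg (Mem (Cst (Suc l)) (SVar X))) [0..<n])"
    define \<Psi> where "\<Psi> = Conj SPf (conjs (map ch l))"
    have PPsi: "ok Sig mx n M (Ex2 X \<Psi>)" "qrank (Ex2 X \<Psi>) \<le> Suc k" "fv1 (Ex2 X \<Psi>) \<subseteq> {y. \<nu> y \<in> B}" "fv2 (Ex2 X \<Psi>) \<subseteq> W"
      using ch l SPf_props unfolding \<Psi>_def SPf_def P_def by (auto simp: conjs_props)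
    have "sat G g\<nu> g\<sigma> (Ex2 X \<Psi>)"
    proof -
      have "SP G UG" unfolding SP_def UG_def using gset_src[OF gl] nE by simp
      then have "sat G g\<nu> (g\<sigma>(X := UG)) SPf" unfolding SPf_def SP_def by (simp add: SPf_sat)
      moreover have "sat G g\<nu> (g\<sigma>(X := UG)) (conjs (map ch l))" using ch l by (auto simp: conjs_props)
      moreover have "UG \<subseteq> univ G" unfolding UG_def using gset_sub[OF gl] .
      ultimately show ?thesis unfolding \<Psi>_def by auto
    qed
    then have "sat G' g\<nu>' g\<sigma>' (Ex2 X \<Psi>)"
      using relD(4)[OF R] PPsi unfolding g\<nu>_def g\<nu>'_def g\<sigma>_def g\<sigma>'_def n_def by blast
    then obtain Y where Y: "Y \<subseteq> univ G'" "sat G' g\<nu>' (g\<sigma>'(X := Y)) SPf" "sat G' g\<nu>' (g\<sigma>'(X := Y)) (conjs (map ch l))"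
      unfolding \<Psi>_def by auto
    have "SP G' Y" using Y(2) n' unfolding SPf_def SP_def by (simp add: SPf_sat)
    then have "Y \<in> C" using Y(1) unfolding C_def by simp
    then show False using Y(3) ch l by (auto simp: conjs_props)
  qed
  then obtain Y where Y: "Y \<subseteq> univ G'" "SP G' Y" "\<And>\<phi>. P \<phi> \<Longrightarrow> (sat G g\<nu> (g\<sigma>(X := UG)) \<phi> \<longleftrightarrow> sat G' g\<nu>' (g\<sigma>'(X := Y)) \<phi>)"
    by blast
  define U' where "U' = (U - B) \<union> {b \<in> B'. dec' b \<in> Y}"
  have UB': "(U - B) \<inter> B' = {}" using U sA by blast
  have U'B: "U' - B' = U - B" unfolding U'_def using UB' by blast
  have EB: "\<And>l. l < n \<Longrightarrow> Inl (E ! l) \<notin> B \<and> Inl (E ! l) \<notin> B'"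
    using glueD(11)[OF gl] glueD(11)[OF gl'] nE by (metis DiffD2 image_eqI nth_mem subsetD)
  have gY: "gset G' dec' B' E U' = Y"
  proof
    show "gset G' dec' B' E U' \<subseteq> Y"
    proof
      fix g assume "g \<in> gset G' dec' B' E U'"
      then consider (a) b where "b \<in> U'" "b \<in> B'" "g = dec' b" | (b) l where "l < n" "Inl (E ! l) \<in> U'" "g = Inl (src G' ! l)"
        unfolding gset_def nE by blast
      then show "g \<in> Y"
      proof cases
        case a then show ?thesis using UB' unfolding U'_def by blast
      next
        case b
        then have "Inl (E ! l) \<in> U" using EB[of l] unfolding U'_def by blast
        then show ?thesis using Y(2) b unfolding SP_def by blast
      qed
    qed
  next
    show "Y \<subseteq> gset G' dec' B' E U'"
    proof
      fix g assume g: "g \<in> Y"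
      then have "g \<in> internal G' \<or> g \<in> Inl ` set (src G')" using Y(1) univ_split[OF gl'] by blast
      then show "g \<in> gset G' dec' B' E U'"
      proof
        assume "g \<in> internal G'"
        then obtain b where b: "b \<in> B'" "g = dec' b" using glueD(5)[OF gl'] by (metis imageE)
        then have "b \<in> U'" using g unfolding U'_def by blast
        then show ?thesis using b unfolding gset_def by blast
      next
        assume "g \<in> Inl ` set (src G')"
        then obtain l where l: "l < n" "g = Inl (src G' ! l)" using n' by (metis imageE in_set_conv_nth)
        then have "Inl (E ! l) \<in> U" using Y(2) g unfolding SP_def by blast
        then have "Inl (E ! l) \<in> U'" using EB[OF l(1)] unfolding U'_def by blast
        then show ?thesis using l nE unfolding gset_def by blast
      qed
    qed
  qed
  have U'sub: "U' \<subseteq> univ D'" unfolding U'_def using U sA glueD(3)[OF gl'] by blast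
  have "rel Sig mx M k (insert X W) G B dec G' B' dec' E \<nu> (\<sigma>(X := U)) \<nu>' (\<sigma>'(X := U'))"
    unfolding rel_def
  proof (intro conjI allI impI)
    fix Z show "(\<sigma>(X := U)) Z - B = (\<sigma>'(X := U')) Z - B'"
      using relD(3)[OF R, of Z] U'B by simp
  next
    fix \<phi> assume a: "ok Sig mx (length (src G)) M \<phi> \<and> qrank \<phi> \<le> k \<and> fv1 \<phi> \<subseteq> {x. \<nu> x \<in> B} \<and> fv2 \<phi> \<subseteq> insert X W"
    have e1: "(\<lambda>Z. gset G dec B E ((\<sigma>(X := U)) Z)) = g\<sigma>(X := UG)" unfolding g\<sigma>_def UG_def by (rule ext) simp
    have e2: "(\<lambda>Z. gset G' dec' B' E ((\<sigma>'(X := U')) Z)) = g\<sigma>'(X := Y)" unfolding g\<sigma>'_def using gY by (intro ext) simp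
    show "sat G (gnu dec B \<nu>) (\<lambda>Z. gset G dec B E ((\<sigma>(X := U)) Z)) \<phi> =
          sat G' (gnu dec' B' \<nu>') (\<lambda>Z. gset G' dec' B' E ((\<sigma>'(X := U')) Z)) \<phi>"
      unfolding e1 e2 g\<nu>_def[symmetric] g\<nu>'_def[symmetric] using Y(3)[of \<phi>] a unfolding P_def n_def by blast
  qed (use relD(1,2)[OF R] in auto)
  then show ?thesis using U'sub by blast
qed


lemma tv_rel:
  assumes R: "rel Sig mx M k W G B dec G' B' dec' E \<nu> \<sigma> \<nu>' \<sigma>'"
    and gl: "glue D G B dec E" and gl': "glue D' G' B' dec' E" and sA: "sameA D B D' B'"
    and t: "ok_t (length (src D)) t"
  shows "tval D \<nu> t \<notin> B \<Longrightarrow> tval D' \<nu>' t = tval D \<nu> t" "tval D \<nu> t \<in> B \<longleftrightarrow> tval D' \<nu>' t \<in> B'"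
    "tval D \<nu> t \<in> B \<Longrightarrow> \<exists>x. t = FVar x \<and> \<nu> x \<in> B"
proof -
  have ss: "src D' = src D" using sA unfolding sameA_def by simp
  show "tval D \<nu> t \<notin> B \<Longrightarrow> tval D' \<nu>' t = tval D \<nu> t"
    using relD(1)[OF R] ss by (cases t) auto
  show "tval D \<nu> t \<in> B \<longleftrightarrow> tval D' \<nu>' t \<in> B'"
  proof (cases t)
    case (FVar x) then show ?thesis using relD(2)[OF R] by simp
  next
    case (Cst j)
    then have j: "1 \<le> j" "j \<le> length (src D)" using t by auto
    show ?thesis using src_notB[OF gl j] src_notB[OF gl', of j] j ss Cst by simp
  qed
  show "tval D \<nu> t \<in> B \<Longrightarrow> \<exists>x. t = FVar x \<and> \<nu> x \<in> B"
  proof (cases t)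
    case (Cst j)
    then have j: "1 \<le> j" "j \<le> length (src D)" using t by auto
    then show "tval D \<nu> t \<in> B \<Longrightarrow> \<exists>x. t = FVar x \<and> \<nu> x \<in> B" using src_notB[OF gl j] Cst by simp
  qed simp
qed

lemma lab_B:
  assumes gl: "glue D G B dec E" and w: "w \<in> B"
  shows "(\<exists>d\<in>edges D. w = Inr d \<and> lab D d = a) \<longleftrightarrow> (\<exists>f\<in>edges G. dec w = Inr f \<and> lab G f = a)"
proof (cases w)
  case (Inl v)
  then have "isl (dec w)" using glueD(6)[OF gl w] by simp
  then show ?thesis using Inl by auto
next
  case (Inr d)
  obtain f where f: "dec (Inr d) = Inr f" "f \<in> edges G" "lab D d = lab G f"
    using glue_edge[OF gl, of d] w Inr by metis
  have "d \<in> edges D" using w Inr glueD(3)[OF gl] by (auto simp: univ_def)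
  then show ?thesis using f Inr by auto
qed

lemma inc_B:
  assumes gl: "glue D G B dec E" and a: "a \<in> B"
  shows "(\<exists>d\<in>edges D. \<exists>v. a = Inr d \<and> b = Inl v \<and> 1 \<le> i \<and> i \<le> length (inc D d) \<and> inc D d ! (i - 1) = v) \<longleftrightarrow>
         (\<exists>g. glo B dec E G b = Some g \<and> (\<exists>f\<in>edges G. \<exists>v. dec a = Inr f \<and> g = Inl v \<and> 1 \<le> i \<and> i \<le> length (inc G f) \<and> inc G f ! (i - 1) = v))"
proof (cases a)
  case (Inl v)
  then have "isl (dec a)" using glueD(6)[OF gl a] by simp
  then show ?thesis using Inl by auto
next
  case (Inr d)
  obtain f where f: "dec (Inr d) = Inr f" "f \<in> edges G" "length (inc D d) = length (inc G f)"
    "\<And>i w. i < length (inc G f) \<Longrightarrow> (w = Inl (inc D d ! i)) \<longleftrightarrow> glo B dec E G w = Some (Inl (inc G f ! i))"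
    using glue_edge[OF gl, of d] a Inr by metis
  have dD: "d \<in> edges D" using a Inr glueD(3)[OF gl] by (auto simp: univ_def)
  show ?thesis
  proof
    assume "\<exists>d\<in>edges D. \<exists>v. a = Inr d \<and> b = Inl v \<and> 1 \<le> i \<and> i \<le> length (inc D d) \<and> inc D d ! (i - 1) = v"
    then have h: "b = Inl (inc D d ! (i - 1))" "1 \<le> i" "i \<le> length (inc G f)" using Inr f(3) by auto
    then have "glo B dec E G b = Some (Inl (inc G f ! (i - 1)))" using f(4)[of "i - 1" b] by simp
    then show "\<exists>g. glo B dec E G b = Some g \<and> (\<exists>f\<in>edges G. \<exists>v. dec a = Inr f \<and> g = Inl v \<and> 1 \<le> i \<and> i \<le> length (inc G f) \<and> inc G f ! (i - 1) = v)"
      using h f(1,2) Inr by blast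
  next
    assume "\<exists>g. glo B dec E G b = Some g \<and> (\<exists>f\<in>edges G. \<exists>v. dec a = Inr f \<and> g = Inl v \<and> 1 \<le> i \<and> i \<le> length (inc G f) \<and> inc G f ! (i - 1) = v)"
    then have h: "glo B dec E G b = Some (Inl (inc G f ! (i - 1)))" "1 \<le> i" "i \<le> length (inc G f)" using Inr f(1) by auto
    then have "b = Inl (inc D d ! (i - 1))" using f(4)[of "i - 1" b] by simp
    then show "\<exists>d\<in>edges D. \<exists>v. a = Inr d \<and> b = Inl v \<and> 1 \<le> i \<and> i \<le> length (inc D d) \<and> inc D d ! (i - 1) = v"
      using h f(3) dD Inr by auto
  qed
qed

lemma edgeA:
  assumes sA: "sameA D B D' B'" and d: "Inr d \<notin> B" "Inr d \<notin> B'"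
  shows "d \<in> edges D \<longleftrightarrow> d \<in> edges D'" "d \<in> edges D \<Longrightarrow> lab D d = lab D' d \<and> inc D d = inc D' d"
proof -
  have u: "univ D - B = univ D' - B'" using sA unfolding sameA_def by simp
  have "Inr d \<in> univ D - B \<longleftrightarrow> Inr d \<in> univ D' - B'" using u by simp
  then show "d \<in> edges D \<longleftrightarrow> d \<in> edges D'" using d by (auto simp: univ_def)
  show "d \<in> edges D \<Longrightarrow> lab D d = lab D' d \<and> inc D d = inc D' d"
    using sA d unfolding sameA_def by (auto simp: univ_def)
qed

lemma atom_Eq:
  assumes R: "rel Sig mx M k W G B dec G' B' dec' E \<nu> \<sigma> \<nu>' \<sigma>'"
    and gl: "glue D G B dec E" and gl': "glue D' G' B' dec' E" and sA: "sameA D B D' B'"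
    and ok: "ok Sig mx (length (src D)) M (Eq s t)"
  shows "sat D \<nu> \<sigma> (Eq s t) \<longleftrightarrow> sat D' \<nu>' \<sigma>' (Eq s t)"
proof -
  note ts = tv_rel[OF R gl gl' sA, of s] tv_rel[OF R gl gl' sA, of t]
  have oks: "ok_t (length (src D)) s" "ok_t (length (src D)) t" using ok by auto
  show ?thesis
  proof (cases "tval D \<nu> s \<in> B \<and> tval D \<nu> t \<in> B")
    case True
    obtain x y where xy: "s = FVar x" "t = FVar y" "\<nu> x \<in> B" "\<nu> y \<in> B" using ts(3,6) oks True by blast
    have xy': "\<nu>' x \<in> B'" "\<nu>' y \<in> B'" using xy relD(2)[OF R] by auto
    have "sat G (gnu dec B \<nu>) (\<lambda>X. gset G dec B E (\<sigma> X)) (Eq (FVar x) (FVar y)) \<longleftrightarrow>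
          sat G' (gnu dec' B' \<nu>') (\<lambda>X. gset G' dec' B' E (\<sigma>' X)) (Eq (FVar x) (FVar y))"
      using xy by (intro relD(4)[OF R]) auto
    moreover have "sat G (gnu dec B \<nu>) (\<lambda>X. gset G dec B E (\<sigma> X)) (Eq (FVar x) (FVar y)) \<longleftrightarrow> \<nu> x = \<nu> y"
      using xy glueD(4)[OF gl] by (auto simp: gnu_def inj_on_def)
    moreover have "sat G' (gnu dec' B' \<nu>') (\<lambda>X. gset G' dec' B' E (\<sigma>' X)) (Eq (FVar x) (FVar y)) \<longleftrightarrow> \<nu>' x = \<nu>' y"
      using xy' glueD(4)[OF gl'] by (auto simp: gnu_def inj_on_def)
    ultimately show ?thesis using xy by simp
  next
    case False
    have aux: "\<And>a b a' b'. \<not> (a \<in> B \<and> b \<in> B) \<Longrightarrow> (a \<in> B \<longleftrightarrow> a' \<in> B') \<Longrightarrow> (b \<in> B \<longleftrightarrow> b' \<in> B') \<Longrightarrow>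
       (a \<notin> B \<Longrightarrow> a' = a) \<Longrightarrow> (b \<notin> B \<Longrightarrow> b' = b) \<Longrightarrow> (a = b \<longleftrightarrow> a' = b')" by blast
    have "tval D \<nu> s = tval D \<nu> t \<longleftrightarrow> tval D' \<nu>' s = tval D' \<nu>' t"
      by (rule aux[OF False]) (use ts oks in auto)
    then show ?thesis by simp
  qed
qed

lemma atom_Lab:
  assumes R: "rel Sig mx M k W G B dec G' B' dec' E \<nu> \<sigma> \<nu>' \<sigma>'"
    and gl: "glue D G B dec E" and gl': "glue D' G' B' dec' E" and sA: "sameA D B D' B'"
    and ok: "ok Sig mx (length (src D)) M (Lab a t)"
  shows "sat D \<nu> \<sigma> (Lab a t) \<longleftrightarrow> sat D' \<nu>' \<sigma>' (Lab a t)"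
proof -
  note ts = tv_rel[OF R gl gl' sA, of t]
  have okt: "ok_t (length (src D)) t" "a \<in> Sig" using ok by auto
  show ?thesis
  proof (cases "tval D \<nu> t \<in> B")
    case True
    obtain x where x: "t = FVar x" "\<nu> x \<in> B" using ts(3) okt True by blast
    have x': "\<nu>' x \<in> B'" using x relD(2)[OF R] by auto
    have "sat G (gnu dec B \<nu>) (\<lambda>X. gset G dec B E (\<sigma> X)) (Lab a (FVar x)) \<longleftrightarrow>
          sat G' (gnu dec' B' \<nu>') (\<lambda>X. gset G' dec' B' E (\<sigma>' X)) (Lab a (FVar x))"
      using x okt by (intro relD(4)[OF R]) auto
    then show ?thesis using x x' lab_B[OF gl x(2), of a] lab_B[OF gl' x', of a] by (simp add: gnu_def)
  next
    case False
    then have e: "tval D' \<nu>' t = tval D \<nu> t" "tval D \<nu> t \<notin> B'" using ts okt by auto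
    show ?thesis
    proof (cases "tval D \<nu> t")
      case (Inl v) then show ?thesis using e by simp
    next
      case (Inr d)
      then show ?thesis using e False edgeA[OF sA, of d] by auto
    qed
  qed
qed

lemma atom_Inc:
  assumes R: "rel Sig mx M k W G B dec G' B' dec' E \<nu> \<sigma> \<nu>' \<sigma>'"
    and gl: "glue D G B dec E" and gl': "glue D' G' B' dec' E" and sA: "sameA D B D' B'"
    and ok: "ok Sig mx (length (src D)) M (Inc i s t)"
  shows "sat D \<nu> \<sigma> (Inc i s t) \<longleftrightarrow> sat D' \<nu>' \<sigma>' (Inc i s t)"
proof -
  note ss = tv_rel[OF R gl gl' sA, of s]
  note ts = tv_rel[OF R gl gl' sA, of t]
  have okt: "ok_t (length (src D)) s" "ok_t (length (src D)) t" using ok by auto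
  have nG: "length (src G) = length E" "length (src G') = length E" using glueD(7)[OF gl] glueD(7)[OF gl'] by auto
  define b where "b = tval D \<nu> t"
  define b' where "b' = tval D' \<nu>' t"
  show ?thesis
  proof (cases "tval D \<nu> s \<in> B")
    case False
    then have e: "tval D' \<nu>' s = tval D \<nu> s" "tval D \<nu> s \<notin> B'" using ss okt by auto
    show ?thesis
    proof (cases "tval D \<nu> s")
      case (Inl v) then show ?thesis using e by simp
    next
      case (Inr d)
      have dd: "d \<in> edges D \<longleftrightarrow> d \<in> edges D'" "d \<in> edges D \<Longrightarrow> inc D d = inc D' d"
        using edgeA[OF sA, of d] e False Inr by auto
      show ?thesis
      proof (cases "b \<in> B")
        case True
        then have "b' \<in> B'" using ts okt unfolding b_def b'_def by simp
        have n1: "d \<in> edges D \<Longrightarrow> Inl ` set (inc D d) \<inter> B = {}"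
          using glueD(13)[OF gl, of d] False Inr by (auto simp: univ_def)
        have n2: "d \<in> edges D' \<Longrightarrow> Inl ` set (inc D' d) \<inter> B' = {}"
          using glueD(13)[OF gl', of d] e Inr by (auto simp: univ_def)
        have "\<not> sat D \<nu> \<sigma> (Inc i s t)"
        proof
          assume "sat D \<nu> \<sigma> (Inc i s t)"
          then obtain v where "d \<in> edges D" "b = Inl v" "1 \<le> i" "i \<le> length (inc D d)" "inc D d ! (i - 1) = v"
            using Inr unfolding b_def by auto
          then have "b \<in> Inl ` set (inc D d)" by (metis image_eqI nth_mem diff_less le_less_trans zero_less_one less_le_trans)
          then show False using n1 True \<open>d \<in> edges D\<close> by blast
        qed
        moreover have "\<not> sat D' \<nu>' \<sigma>' (Inc i s t)"
        proof
          assume "sat D' \<nu>' \<sigma>' (Inc i s t)"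
          then obtain v where "d \<in> edges D'" "b' = Inl v" "1 \<le> i" "i \<le> length (inc D' d)" "inc D' d ! (i - 1) = v"
            using Inr e unfolding b'_def by auto
          then have "b' \<in> Inl ` set (inc D' d)" by (metis image_eqI nth_mem diff_less le_less_trans zero_less_one less_le_trans)
          then show False using n2 \<open>b' \<in> B'\<close> \<open>d \<in> edges D'\<close> by blast
        qed
        ultimately show ?thesis by blast
      next
        case False
        then have "b' = b" using ts okt unfolding b_def b'_def by simp
        then show ?thesis using e Inr dd unfolding b_def b'_def by auto
      qed
    qed
  next
    case True
    obtain x where x: "s = FVar x" "\<nu> x \<in> B" using ss(3) okt True by blast
    have x': "\<nu>' x \<in> B'" using x relD(2)[OF R] by auto
    have LD: "sat D \<nu> \<sigma> (Inc i s t) \<longleftrightarrow> (\<exists>g. glo B dec E G b = Some g \<and> (\<exists>f\<in>edges G. \<exists>v. dec (\<nu> x) = Inr f \<and> g = Inl v \<and> 1 \<le> i \<and> i \<le> length (inc G f) \<and> inc G f ! (i - 1) = v))"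
      using inc_B[OF gl x(2), of b i] x unfolding b_def by simp
    have LD': "sat D' \<nu>' \<sigma>' (Inc i s t) \<longleftrightarrow> (\<exists>g. glo B' dec' E G' b' = Some g \<and> (\<exists>f\<in>edges G'. \<exists>v. dec' (\<nu>' x) = Inr f \<and> g = Inl v \<and> 1 \<le> i \<and> i \<le> length (inc G' f) \<and> inc G' f ! (i - 1) = v))"
      using inc_B[OF gl' x', of b' i] x unfolding b'_def by simp
    define g\<nu> where "g\<nu> = gnu dec B \<nu>"
    define g\<nu>' where "g\<nu>' = gnu dec' B' \<nu>'"
    define g\<sigma> where "g\<sigma> = (\<lambda>X. gset G dec B E (\<sigma> X))"
    define g\<sigma>' where "g\<sigma>' = (\<lambda>X. gset G' dec' B' E (\<sigma>' X))"
    have gx: "g\<nu> x = dec (\<nu> x)" "g\<nu>' x = dec' (\<nu>' x)" using x x' unfolding g\<nu>_def g\<nu>'_def gnu_def by auto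
    show ?thesis
    proof (cases "b \<in> B")
      case True
      obtain y where y: "t = FVar y" "\<nu> y \<in> B" using ts(3) okt True unfolding b_def by blast
      have y': "\<nu>' y \<in> B'" using y relD(2)[OF R] by auto
      have "sat G g\<nu> g\<sigma> (Inc i (FVar x) (FVar y)) \<longleftrightarrow> sat G' g\<nu>' g\<sigma>' (Inc i (FVar x) (FVar y))"
        unfolding g\<nu>_def g\<nu>'_def g\<sigma>_def g\<sigma>'_def using x y ok by (intro relD(4)[OF R]) auto
      moreover have "glo B dec E G b = Some (g\<nu> y)" "glo B' dec' E G' b' = Some (g\<nu>' y)"
        using y y' unfolding b_def b'_def g\<nu>_def g\<nu>'_def gnu_def glo_def by auto
      ultimately show ?thesis using LD LD' gx by auto
    next
      case False
      then have bb: "b' = b" "b \<notin> B'" using ts okt unfolding b_def b'_def by auto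
      show ?thesis
      proof (cases "\<exists>v. b = Inl v \<and> v \<in> set E")
        case True
        then obtain v where v: "b = Inl v" "v \<in> set E" by blast
        have il: "idxE E v < length E" using idxE[OF glueD(8)[OF gl] v(2)] by simp
        have "sat G g\<nu> g\<sigma> (Inc i (FVar x) (Cst (Suc (idxE E v)))) \<longleftrightarrow> sat G' g\<nu>' g\<sigma>' (Inc i (FVar x) (Cst (Suc (idxE E v))))"
          unfolding g\<nu>_def g\<nu>'_def g\<sigma>_def g\<sigma>'_def using x ok il nG by (intro relD(4)[OF R]) auto
        moreover have "glo B dec E G b = Some (Inl (src G ! idxE E v))" "glo B' dec' E G' b' = Some (Inl (src G' ! idxE E v))"
          using v False bb unfolding glo_def by auto
        ultimately show ?thesis using LD LD' gx by auto
      next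
        case False
        then have "glo B dec E G b = None" "glo B' dec' E G' b' = None"
          using \<open>b \<notin> B\<close> bb unfolding glo_def by (auto split: sum.splits)
        then show ?thesis unfolding LD LD' by simp
      qed
    qed
  qed
qed


lemma qrank_conjs0[simp]: "qrank (conjs l) = 0 \<longleftrightarrow> (\<forall>\<phi>\<in>set l. qrank \<phi> = 0)"
  using conjs_props(4)[of l 0] by simp

lemma gset_char:
  assumes gl: "glue D G B dec E"
    and h1: "\<And>u. u \<in> B \<Longrightarrow> u \<in> P \<longleftrightarrow> Q (dec u)"
    and h2: "\<And>l. l < length E \<Longrightarrow> Inl (E ! l) \<in> P \<longleftrightarrow> Q (Inl (src G ! l))"
  shows "gset G dec B E P = {g \<in> univ G. Q g}"
proof
  show "gset G dec B E P \<subseteq> {g \<in> univ G. Q g}"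
  proof
    fix g assume g: "g \<in> gset G dec B E P"
    then have "g \<in> univ G" using gset_sub[OF gl] by blast
    moreover have "Q g" using g h1 h2 unfolding gset_def by blast
    ultimately show "g \<in> {g \<in> univ G. Q g}" by simp
  qed
next
  show "{g \<in> univ G. Q g} \<subseteq> gset G dec B E P"
  proof
    fix g assume g: "g \<in> {g \<in> univ G. Q g}"
    then have "g \<in> internal G \<or> g \<in> Inl ` set (src G)" using univ_split[OF gl] by blast
    then show "g \<in> gset G dec B E P"
    proof
      assume "g \<in> internal G"
      then obtain u where u: "u \<in> B" "g = dec u" using glueD(5)[OF gl] by (metis imageE)
      then have "u \<in> P" using h1 g by simp
      then show ?thesis using u unfolding gset_def by blast
    next
      assume "g \<in> Inl ` set (src G)"
      then obtain l where l: "l < length E" "g = Inl (src G ! l)" using glueD(7)[OF gl] by (metis imageE in_set_conv_nth)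
      then have "Inl (E ! l) \<in> P" using h2 g by simp
      then show ?thesis using l unfolding gset_def by blast
    qed
  qed
qed

definition theta :: "nat \<Rightarrow> nat list \<Rightarrow> 'a cmso \<Rightarrow> 'a cmso" where
  "theta n L \<tau> = Neg (Conj (Neg (Conj (conjs (map (\<lambda>j. Neg (Eq (FVar 0) (Cst (Suc j)))) [0..<n])) \<tau>))
                          (conjs (map (\<lambda>l. Neg (Eq (FVar 0) (Cst (Suc l)))) L)))"

lemma theta_sat:
  "sat H \<nu> \<sigma> (theta (length (src H)) L \<tau>) \<longleftrightarrow>
     (\<nu> 0 \<notin> Inl ` set (src H) \<and> sat H \<nu> \<sigma> \<tau>) \<or> (\<exists>l\<in>set L. \<nu> 0 = Inl (src H ! l))"
  unfolding theta_def using NS_sat[of H \<nu> \<sigma> 0] by (auto simp: conjs_props)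

lemma theta_props:
  "set L \<subseteq> {..<n} \<Longrightarrow> ok Sig mx n M \<tau> \<Longrightarrow> qrank \<tau> = 0 \<Longrightarrow> fv1 \<tau> \<subseteq> {0} \<Longrightarrow> fv2 \<tau> = {} \<Longrightarrow>
   ok Sig mx n M (theta n L \<tau>) \<and> qrank (theta n L \<tau>) = 0 \<and> fv1 (theta n L \<tau>) \<subseteq> {0} \<and> fv2 (theta n L \<tau>) = {}"
  unfolding theta_def by (auto simp: conjs_props)

lemma set_term:
  assumes R: "rel Sig mx M k W G B dec G' B' dec' E \<nu> \<sigma> \<nu>' \<sigma>'"
    and gl: "glue D G B dec E" and gl': "glue D' G' B' dec' E" and sA: "sameA D B D' B'"
    and okS: "ok_s Sig mx (length (src D)) M S"
    and IHa: "\<And>\<psi> u. S = SConst \<psi> \<Longrightarrow> u \<notin> B \<Longrightarrow> u \<in> univ D \<Longrightarrow> sat D (\<nu>(0 := u)) \<sigma> \<psi> \<longleftrightarrow> sat D' (\<nu>'(0 := u)) \<sigma>' \<psi>"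
    and IHb: "\<And>\<psi> \<chi>. S = SConst \<psi> \<Longrightarrow> ok Sig mx (length (src D)) M \<chi> \<Longrightarrow> qrank \<chi> = 0 \<Longrightarrow> fv1 \<chi> = {} \<Longrightarrow> fv2 \<chi> = {} \<Longrightarrow>
                fsz \<chi> \<le> fsz \<psi> \<Longrightarrow> sat D \<nu> \<sigma> \<chi> \<longleftrightarrow> sat D' \<nu>' \<sigma>' \<chi>"
  shows "seval D \<nu> \<sigma> S - B = seval D' \<nu>' \<sigma>' S - B' \<and>
    (\<exists>SG. ok_s Sig mx (length (src G)) M SG \<and> fv2_s SG \<subseteq> fv2_s S \<and>
       gset G dec B E (seval D \<nu> \<sigma> S) = seval G (gnu dec B \<nu>) (\<lambda>X. gset G dec B E (\<sigma> X)) SG \<and>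
       gset G' dec' B' E (seval D' \<nu>' \<sigma>' S) = seval G' (gnu dec' B' \<nu>') (\<lambda>X. gset G' dec' B' E (\<sigma>' X)) SG)"
proof (cases S)
  case (SVar X)
  then show ?thesis using relD(3)[OF R] by (intro conjI exI[of _ "SVar X"]) auto
next
  case (SConst \<psi>)
  have okp: "ok Sig mx (length (src D)) M \<psi>" "qrank \<psi> = 0" "fv1 \<psi> \<subseteq> {0}" "fv2 \<psi> = {}" using okS SConst by auto
  define P where "P = seval D \<nu> \<sigma> S"
  define P' where "P' = seval D' \<nu>' \<sigma>' S"
  have Pd: "P = {u \<in> univ D. sat D (\<nu>(0 := u)) \<sigma> \<psi>}" "P' = {u \<in> univ D'. sat D' (\<nu>'(0 := u)) \<sigma>' \<psi>}"
    unfolding P_def P'_def SConst by auto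
  have uA: "univ D - B = univ D' - B'" and ss: "src D' = src D" using sA unfolding sameA_def by auto
  have PB: "P - B = P' - B'"
  proof -
    have "\<And>u. u \<in> univ D - B \<Longrightarrow> sat D (\<nu>(0 := u)) \<sigma> \<psi> \<longleftrightarrow> sat D' (\<nu>'(0 := u)) \<sigma>' \<psi>"
      using IHa[OF SConst] by blast
    then show ?thesis unfolding Pd using uA by blast
  qed
  define n where "n = length (src G)"
  have nE: "length E = n" "length (src G') = n" using glueD(7)[OF gl] glueD(7)[OF gl'] n_def by auto
  define Or where "Or = (\<lambda>\<chi>. sat D \<nu> \<sigma> \<chi>)"
  define cs where "cs = csub (src D) E"
  define L where "L = filter (\<lambda>l. Inl (E ! l) \<in> P) [0..<n]"
  define \<theta> where "\<theta> = theta n L (tr Or cs \<psi>)"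
  have csr: "\<And>j l. cs j = Some l \<Longrightarrow> 1 \<le> l \<and> l \<le> n"
    unfolding cs_def csub_def using idxE[OF glueD(8)[OF gl]] nE by (auto simp: Suc_le_eq split: if_splits)
  have trp: "ok Sig mx n M (tr Or cs \<psi>) \<and> qrank (tr Or cs \<psi>) = 0 \<and> fv1 (tr Or cs \<psi>) \<subseteq> fv1 \<psi> \<and> fv2 (tr Or cs \<psi>) \<subseteq> fv2 \<psi>"
    using tr_props(1)[OF csr okp(2,1)] .
  have thp: "ok Sig mx n M \<theta> \<and> qrank \<theta> = 0 \<and> fv1 \<theta> \<subseteq> {0} \<and> fv2 \<theta> = {}"
    unfolding \<theta>_def using trp okp by (intro theta_props) (auto simp: L_def)
  define g\<nu> where "g\<nu> = gnu dec B \<nu>"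
  define g\<nu>' where "g\<nu>' = gnu dec' B' \<nu>'"
  define g\<sigma> where "g\<sigma> = (\<lambda>X. gset G dec B E (\<sigma> X))"
  define g\<sigma>' where "g\<sigma>' = (\<lambda>X. gset G' dec' B' E (\<sigma>' X))"
  have EB: "\<And>l. l < n \<Longrightarrow> Inl (E ! l) \<notin> B \<and> Inl (E ! l) \<notin> B'"
    using glueD(11)[OF gl] glueD(11)[OF gl'] nE by (metis DiffD2 image_eqI nth_mem subsetD)
  have Lsrc: "\<And>H l. length (src H) = n \<Longrightarrow> distinct (src H) \<Longrightarrow> l < n \<Longrightarrow> (\<exists>l'\<in>set L. Inl (src H ! l) = Inl (src H ! l')) \<longleftrightarrow> Inl (E ! l) \<in> P"
    unfolding L_def by (auto simp: nth_eq_iff_index_eq)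
  have G1: "gset G dec B E P = {g \<in> univ G. sat G (g\<nu>(0 := g)) g\<sigma> \<theta>}"
  proof (rule gset_char[OF gl])
    fix u assume u: "u \<in> B"
    have uD: "u \<in> univ D" using u glueD(3)[OF gl] by blast
    have ns: "dec u \<notin> Inl ` set (src G)" using dec_not_src[OF gl u] .
    have "sat D (\<nu>(0 := u)) \<sigma> \<psi> = sat G (g\<nu>(0 := dec u)) g\<sigma> (tr Or cs \<psi>)"
    proof (rule tr_correct(1)[OF gl cs_def, where N = "Suc (fsz \<psi>)"])
      show "\<And>\<chi> \<nu>0 \<sigma>0. ok Sig mx (length (src D)) M \<chi> \<Longrightarrow> qrank \<chi> = 0 \<Longrightarrow> fv1 \<chi> = {} \<Longrightarrow> fv2 \<chi> = {} \<Longrightarrow> fsz \<chi> < Suc (fsz \<psi>) \<Longrightarrow>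
          Or \<chi> = sat D \<nu>0 \<sigma>0 \<chi>"
        unfolding Or_def by (rule coinc(1)) auto
    qed (use okp u in auto)
    have Lm: "\<forall>l\<in>set L. src G ! l \<in> set (src G)" unfolding L_def n_def by auto
    then show "u \<in> P \<longleftrightarrow> sat G (g\<nu>(0 := dec u)) g\<sigma> \<theta>"
      unfolding \<theta>_def n_def using theta_sat[of G "g\<nu>(0 := dec u)" g\<sigma> L] ns uD Pd(1) \<open>sat D _ _ _ = _\<close> by auto
  next
    fix l assume l: "l < length E"
    show "Inl (E ! l) \<in> P \<longleftrightarrow> sat G (g\<nu>(0 := Inl (src G ! l))) g\<sigma> \<theta>"
      unfolding \<theta>_def n_def using theta_sat[of G "g\<nu>(0 := Inl (src G ! l))" g\<sigma> L] Lsrc[of G l] l nE n_def glueD(9)[OF gl]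
      by (auto intro: nth_mem)
  qed
  have G2: "gset G' dec' B' E P' = {g \<in> univ G'. sat G' (g\<nu>'(0 := g)) g\<sigma>' \<theta>}"
  proof (rule gset_char[OF gl'])
    fix u assume u: "u \<in> B'"
    have uD: "u \<in> univ D'" using u glueD(3)[OF gl'] by blast
    have ns: "dec' u \<notin> Inl ` set (src G')" using dec_not_src[OF gl' u] .
    have "sat D' (\<nu>'(0 := u)) \<sigma>' \<psi> = sat G' (g\<nu>'(0 := dec' u)) g\<sigma>' (tr Or cs \<psi>)"
    proof (rule tr_correct(1)[OF gl', where N = "Suc (fsz \<psi>)"])
      show "cs = csub (src D') E" using ss cs_def by simp
      show "\<And>\<chi> \<nu>0 \<sigma>0. ok Sig mx (length (src D')) M \<chi> \<Longrightarrow> qrank \<chi> = 0 \<Longrightarrow> fv1 \<chi> = {} \<Longrightarrow> fv2 \<chi> = {} \<Longrightarrow> fsz \<chi> < Suc (fsz \<psi>) \<Longrightarrow>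
          Or \<chi> = sat D' \<nu>0 \<sigma>0 \<chi>"
      proof -
        fix \<chi> \<nu>0 \<sigma>0 assume a: "ok Sig mx (length (src D')) M \<chi>" "qrank \<chi> = 0" "fv1 \<chi> = {}" "fv2 \<chi> = {}" "fsz \<chi> < Suc (fsz \<psi>)"
        have "Or \<chi> = sat D' \<nu>' \<sigma>' \<chi>" unfolding Or_def using IHb[OF SConst, of \<chi>] a ss by simp
        also have "\<dots> = sat D' \<nu>0 \<sigma>0 \<chi>" using a by (intro coinc(1)) auto
        finally show "Or \<chi> = sat D' \<nu>0 \<sigma>0 \<chi>" .
      qed
    qed (use okp u ss in auto)
    have Lm: "\<forall>l\<in>set L. src G' ! l \<in> set (src G')" unfolding L_def using nE by auto
    then show "u \<in> P' \<longleftrightarrow> sat G' (g\<nu>'(0 := dec' u)) g\<sigma>' \<theta>"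
      unfolding \<theta>_def using theta_sat[of G' "g\<nu>'(0 := dec' u)" g\<sigma>' L] ns uD Pd(2) nE \<open>sat D' _ _ _ = _\<close> by auto
  next
    fix l assume l: "l < length E"
    have "Inl (E ! l) \<in> P' \<longleftrightarrow> Inl (E ! l) \<in> P" using PB EB[of l] l nE by blast
    then show "Inl (E ! l) \<in> P' \<longleftrightarrow> sat G' (g\<nu>'(0 := Inl (src G' ! l))) g\<sigma>' \<theta>"
      unfolding \<theta>_def using theta_sat[of G' "g\<nu>'(0 := Inl (src G' ! l))" g\<sigma>' L] Lsrc[of G' l] l nE glueD(9)[OF gl']
      by (auto intro: nth_mem)
  qed
  have "ok_s Sig mx (length (src G)) M (SConst \<theta>)" using thp n_def by simp
  moreover have "gset G dec B E (seval D \<nu> \<sigma> S) = seval G g\<nu> g\<sigma> (SConst \<theta>)" using G1 P_def by simp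
  moreover have "gset G' dec' B' E (seval D' \<nu>' \<sigma>' S) = seval G' g\<nu>' g\<sigma>' (SConst \<theta>)" using G2 P'_def by simp
  ultimately show ?thesis using PB unfolding P_def P'_def g\<nu>_def g\<nu>'_def g\<sigma>_def g\<sigma>'_def
    by (intro conjI exI[of _ "SConst \<theta>"]) auto
qed


definition srcset :: "'a hg \<Rightarrow> nat list \<Rightarrow> (nat + nat) set \<Rightarrow> (nat + nat) set" where
  "srcset G E A = {Inl (src G ! l) | l. l < length E \<and> Inl (E ! l) \<in> A}"

lemma gset_split:
  assumes gl: "glue D G B dec E"
  shows "gset G dec B E P = dec ` (P \<inter> B) \<union> srcset G E (P - B)" "dec ` (P \<inter> B) \<inter> srcset G E A = {}"
proof -
  have "\<And>l. l < length E \<Longrightarrow> Inl (E ! l) \<notin> B" using glueD(11)[OF gl] by (metis DiffD2 image_eqI nth_mem subsetD)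
  then show "gset G dec B E P = dec ` (P \<inter> B) \<union> srcset G E (P - B)" unfolding gset_def srcset_def by blast
  show "dec ` (P \<inter> B) \<inter> srcset G E A = {}"
    unfolding srcset_def using dec_not_src[OF gl] glueD(7)[OF gl] by (fastforce intro: nth_mem)
qed

lemma card_srcset:
  assumes gl: "glue D G B dec E"
  shows "card (srcset G E A) = card {l. l < length E \<and> Inl (E ! l) \<in> A}"
proof -
  have "srcset G E A = (\<lambda>l. Inl (src G ! l)) ` {l. l < length E \<and> Inl (E ! l) \<in> A}" unfolding srcset_def by blast
  moreover have "inj_on (\<lambda>l. Inl (src G ! l) :: nat + nat) {l. l < length E \<and> Inl (E ! l) \<in> A}"
    using glueD(7,9)[OF gl] by (auto simp: inj_on_def nth_eq_iff_index_eq)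
  ultimately show ?thesis by (simp add: card_image)
qed

lemma sub_char:
  assumes gl: "glue D G B dec E"
  shows "P \<subseteq> Q \<longleftrightarrow> P - B \<subseteq> Q - B \<and> gset G dec B E P \<subseteq> gset G dec B E Q"
proof
  assume "P \<subseteq> Q" then show "P - B \<subseteq> Q - B \<and> gset G dec B E P \<subseteq> gset G dec B E Q" unfolding gset_def by blast
next
  assume h: "P - B \<subseteq> Q - B \<and> gset G dec B E P \<subseteq> gset G dec B E Q"
  show "P \<subseteq> Q"
  proof
    fix x assume x: "x \<in> P"
    show "x \<in> Q"
    proof (cases "x \<in> B")
      case True
      then have "dec x \<in> gset G dec B E P" using gset_B[OF gl True] x by simp
      then have "dec x \<in> gset G dec B E Q" using h by blast
      then show ?thesis using gset_B[OF gl True] by simp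
    next
      case False then show ?thesis using h x by blast
    qed
  qed
qed

lemma single_char:
  assumes gl: "glue D G B dec E"
  shows "(\<exists>u. P = {u}) \<longleftrightarrow> ((P - B = {} \<and> (\<exists>g. gset G dec B E P = {g})) \<or>
                              ((\<exists>u. P - B = {u}) \<and> gset G dec B E P \<subseteq> srcset G E (P - B)))"
proof -
  note sp = gset_split[OF gl, of P]
  have inj: "inj_on dec (P \<inter> B)" using glueD(4)[OF gl] inj_on_subset by blast
  show ?thesis
  proof (cases "P - B = {}")
    case True
    have "srcset G E (P - B) = {}" unfolding True srcset_def by simp
    then have gs: "gset G dec B E P = dec ` (P \<inter> B)" using sp by simp
    have PI: "P = P \<inter> B" using True by blast
    have e1: "(\<exists>u. P = {u}) \<longleftrightarrow> (\<exists>g. dec ` (P \<inter> B) = {g})"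
    proof
      assume "\<exists>u. P = {u}" then show "\<exists>g. dec ` (P \<inter> B) = {g}" using PI by (metis image_empty image_insert)
    next
      assume "\<exists>g. dec ` (P \<inter> B) = {g}"
      then obtain g where g: "dec ` (P \<inter> B) = {g}" by blast
      then obtain u where u: "u \<in> P \<inter> B" "dec u = g" by blast
      have "\<And>w. w \<in> P \<inter> B \<Longrightarrow> w = u" using g u inj unfolding inj_on_def by blast
      then show "\<exists>u. P = {u}" using u PI by blast
    qed
    have nb: "\<not> (\<exists>u. P - B = {u})" unfolding True by simp
    have taut: "\<And>A Y C Z. A \<Longrightarrow> \<not> C \<Longrightarrow> ((A \<and> Y) \<or> (C \<and> Z)) = Y" by blast
    show ?thesis by (simp only: taut[OF True nb] gs e1)
  next
    case False
    have "(\<exists>u. P = {u}) \<longleftrightarrow> (\<exists>u. P - B = {u}) \<and> P \<inter> B = {}"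
    proof
      assume "\<exists>u. P = {u}"
      then obtain u where "P = {u}" by blast
      then show "(\<exists>u. P - B = {u}) \<and> P \<inter> B = {}" using False by auto
    next
      assume h: "(\<exists>u. P - B = {u}) \<and> P \<inter> B = {}"
      then obtain u where "P - B = {u}" by blast
      then have "P = {u}" using h by blast
      then show "\<exists>u. P = {u}" by blast
    qed
    moreover have "P \<inter> B = {} \<longleftrightarrow> gset G dec B E P \<subseteq> srcset G E (P - B)"
    proof -
      have "gset G dec B E P \<subseteq> srcset G E (P - B) \<longleftrightarrow> dec ` (P \<inter> B) \<subseteq> srcset G E (P - B)"
        using sp(1) by auto
      also have "\<dots> \<longleftrightarrow> dec ` (P \<inter> B) = {}" using sp(2)[of "P - B"] by blast
      finally show ?thesis by simp
    qed
    ultimately show ?thesis using False by simp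
  qed
qed

lemma srcform:
  assumes "length (src H) = n" "set L \<subseteq> {..<n}" "Inl ` set (src H) \<subseteq> univ H"
  shows "seval H \<nu> \<sigma> (SConst (Neg (conjs (map (\<lambda>l. Neg (Eq (FVar 0) (Cst (Suc l)))) L)))) =
           {Inl (src H ! l) | l. l \<in> set L}"
    "ok_s Sig mx n M (SConst (Neg (conjs (map (\<lambda>l. Neg (Eq (FVar 0) (Cst (Suc l)))) L))))"
    "fv2_s (SConst (Neg (conjs (map (\<lambda>l. Neg (Eq (FVar 0) (Cst (Suc l)))) L)))) = {}"
proof -
  have m: "\<And>l. l \<in> set L \<Longrightarrow> Inl (src H ! l) \<in> univ H" using assms by (auto intro: nth_mem)
  show "seval H \<nu> \<sigma> (SConst (Neg (conjs (map (\<lambda>l. Neg (Eq (FVar 0) (Cst (Suc l)))) L)))) =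
           {Inl (src H ! l) | l. l \<in> set L}"
    using m by (auto simp: conjs_props)
  show "ok_s Sig mx n M (SConst (Neg (conjs (map (\<lambda>l. Neg (Eq (FVar 0) (Cst (Suc l)))) L))))"
    using assms by (auto simp: conjs_props)
  show "fv2_s (SConst (Neg (conjs (map (\<lambda>l. Neg (Eq (FVar 0) (Cst (Suc l)))) L)))) = {}"
    by (auto simp: conjs_props)
qed


lemma mod_cancel_nat:
  assumes h: "(a + s) mod m = (b + s) mod (m::nat)" shows "a mod m = b mod m"
proof (cases "b \<le> a")
  case True
  then have "m dvd (a + s) - (b + s)" using h mod_eq_dvd_iff_nat[of "b + s" "a + s" m] by simp
  then show ?thesis using mod_eq_dvd_iff_nat[OF True] by simp
next
  case False
  then have "m dvd (b + s) - (a + s)" using h mod_eq_dvd_iff_nat[of "a + s" "b + s" m] by simp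
  then show ?thesis using mod_eq_dvd_iff_nat[of a b m] False by simp
qed

definition STok where
  "STok Sig mx M W G B dec G' B' dec' E \<nu> \<sigma> \<nu>' \<sigma>' P P' SG \<longleftrightarrow> P - B = P' - B' \<and>
     ok_s Sig mx (length (src G)) M SG \<and> fv2_s SG \<subseteq> W \<and>
     gset G dec B E P = seval G (gnu dec B \<nu>) (\<lambda>X. gset G dec B E (\<sigma> X)) SG \<and>
     gset G' dec' B' E P' = seval G' (gnu dec' B' \<nu>') (\<lambda>X. gset G' dec' B' E (\<sigma>' X)) SG"

lemma STokD:
  assumes "STok Sig mx M W G B dec G' B' dec' E \<nu> \<sigma> \<nu>' \<sigma>' P P' SG"
  shows "P - B = P' - B'" "ok_s Sig mx (length (src G)) M SG" "fv2_s SG \<subseteq> W"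
     "gset G dec B E P = seval G (gnu dec B \<nu>) (\<lambda>X. gset G dec B E (\<sigma> X)) SG"
     "gset G' dec' B' E P' = seval G' (gnu dec' B' \<nu>') (\<lambda>X. gset G' dec' B' E (\<sigma>' X)) SG"
  using assms unfolding STok_def by simp_all

lemma atomP_Mem:
  assumes R: "rel Sig mx M k W G B dec G' B' dec' E \<nu> \<sigma> \<nu>' \<sigma>'"
    and gl: "glue D G B dec E" and gl': "glue D' G' B' dec' E" and sA: "sameA D B D' B'"
    and ST: "STok Sig mx M W G B dec G' B' dec' E \<nu> \<sigma> \<nu>' \<sigma>' P P' SG"
    and t: "ok_t (length (src D)) t"
  shows "tval D \<nu> t \<in> P \<longleftrightarrow> tval D' \<nu>' t \<in> P'"
proof -
  note ts = tv_rel[OF R gl gl' sA t]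
  note S = STokD[OF ST]
  show ?thesis
  proof (cases "tval D \<nu> t \<in> B")
    case True
    obtain x where x: "t = FVar x" "\<nu> x \<in> B" using ts(3) True by blast
    have x': "\<nu>' x \<in> B'" using x relD(2)[OF R] by auto
    have "sat G (gnu dec B \<nu>) (\<lambda>X. gset G dec B E (\<sigma> X)) (Mem (FVar x) SG) \<longleftrightarrow>
          sat G' (gnu dec' B' \<nu>') (\<lambda>X. gset G' dec' B' E (\<sigma>' X)) (Mem (FVar x) SG)"
      using x S(2,3) by (intro relD(4)[OF R]) auto
    then have "dec (\<nu> x) \<in> gset G dec B E P \<longleftrightarrow> dec' (\<nu>' x) \<in> gset G' dec' B' E P'"
      using S x x' by (simp add: gnu_def)
    then show ?thesis using gset_B[OF gl x(2)] gset_B[OF gl' x'] x by simp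
  next
    case False
    then have "tval D' \<nu>' t = tval D \<nu> t" "tval D \<nu> t \<notin> B'" using ts by auto
    moreover have "tval D \<nu> t \<in> P - B \<longleftrightarrow> tval D \<nu> t \<in> P' - B'" using S(1) by simp
    ultimately show ?thesis using False by simp
  qed
qed

lemma atomP_Subset:
  assumes R: "rel Sig mx M k W G B dec G' B' dec' E \<nu> \<sigma> \<nu>' \<sigma>'"
    and gl: "glue D G B dec E" and gl': "glue D' G' B' dec' E"
    and ST1: "STok Sig mx M W G B dec G' B' dec' E \<nu> \<sigma> \<nu>' \<sigma>' P P' SG"
    and ST2: "STok Sig mx M W G B dec G' B' dec' E \<nu> \<sigma> \<nu>' \<sigma>' Q Q' TG"
  shows "P \<subseteq> Q \<longleftrightarrow> P' \<subseteq> Q'"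
proof -
  note S1 = STokD[OF ST1] and S2 = STokD[OF ST2]
  have "sat G (gnu dec B \<nu>) (\<lambda>X. gset G dec B E (\<sigma> X)) (Subset SG TG) \<longleftrightarrow>
        sat G' (gnu dec' B' \<nu>') (\<lambda>X. gset G' dec' B' E (\<sigma>' X)) (Subset SG TG)"
    using S1(2,3) S2(2,3) by (intro relD(4)[OF R]) auto
  then have "gset G dec B E P \<subseteq> gset G dec B E Q \<longleftrightarrow> gset G' dec' B' E P' \<subseteq> gset G' dec' B' E Q'"
    using S1 S2 by simp
  then show ?thesis using sub_char[OF gl, of P Q] sub_char[OF gl', of P' Q'] S1 S2 by simp
qed

lemma atomP_Single:
  assumes R: "rel Sig mx M k W G B dec G' B' dec' E \<nu> \<sigma> \<nu>' \<sigma>'"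
    and gl: "glue D G B dec E" and gl': "glue D' G' B' dec' E"
    and ST: "STok Sig mx M W G B dec G' B' dec' E \<nu> \<sigma> \<nu>' \<sigma>' P P' SG"
  shows "(\<exists>u. P = {u}) \<longleftrightarrow> (\<exists>u. P' = {u})"
proof -
  note S = STokD[OF ST]
  define n where "n = length (src G)"
  have nE: "length E = n" "length (src G') = n" using glueD(7)[OF gl] glueD(7)[OF gl'] n_def by auto
  define L where "L = filter (\<lambda>l. Inl (E ! l) \<in> P - B) [0..<n]"
  define \<xi> :: "'a sterm" where "\<xi> = SConst (Neg (conjs (map (\<lambda>l. Neg (Eq (FVar 0) (Cst (Suc l)))) L)))"
  have Ln: "set L \<subseteq> {..<n}" unfolding L_def by auto
  have xs1: "seval G (gnu dec B \<nu>) (\<lambda>X. gset G dec B E (\<sigma> X)) \<xi> = srcset G E (P - B)"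
    unfolding \<xi>_def using srcform(1)[OF n_def[symmetric] Ln glueD(10)[OF gl]] nE unfolding srcset_def L_def by auto
  have xs2: "seval G' (gnu dec' B' \<nu>') (\<lambda>X. gset G' dec' B' E (\<sigma>' X)) \<xi> = srcset G' E (P' - B')"
    unfolding \<xi>_def using srcform(1)[OF nE(2) Ln glueD(10)[OF gl']] nE S unfolding srcset_def L_def by auto
  have xp: "ok_s Sig mx n M \<xi>" "fv2_s \<xi> = {}" unfolding \<xi>_def using srcform(2,3)[OF n_def[symmetric] Ln glueD(10)[OF gl]] by auto
  have e1: "(\<exists>g. gset G dec B E P = {g}) \<longleftrightarrow> (\<exists>g. gset G' dec' B' E P' = {g})"
  proof -
    have "sat G (gnu dec B \<nu>) (\<lambda>X. gset G dec B E (\<sigma> X)) (Single SG) \<longleftrightarrow>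
          sat G' (gnu dec' B' \<nu>') (\<lambda>X. gset G' dec' B' E (\<sigma>' X)) (Single SG)"
      using S(2,3) by (intro relD(4)[OF R]) auto
    then show ?thesis using S by simp
  qed
  have e2: "gset G dec B E P \<subseteq> srcset G E (P - B) \<longleftrightarrow> gset G' dec' B' E P' \<subseteq> srcset G' E (P' - B')"
  proof -
    have "sat G (gnu dec B \<nu>) (\<lambda>X. gset G dec B E (\<sigma> X)) (Subset SG \<xi>) \<longleftrightarrow>
          sat G' (gnu dec' B' \<nu>') (\<lambda>X. gset G' dec' B' E (\<sigma>' X)) (Subset SG \<xi>)"
      using S(2,3) xp n_def by (intro relD(4)[OF R]) auto
    then show ?thesis using S xs1 xs2 by simp
  qed
  show ?thesis unfolding single_char[OF gl, of P] single_char[OF gl', of P'] using e1 e2 S by simp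
qed

lemma atomP_Card:
  assumes R: "rel Sig mx M k W G B dec G' B' dec' E \<nu> \<sigma> \<nu>' \<sigma>'"
    and gl: "glue D G B dec E" and gl': "glue D' G' B' dec' E"
    and ST: "STok Sig mx M W G B dec G' B' dec' E \<nu> \<sigma> \<nu>' \<sigma>' P P' SG" and m: "m \<in> M"
  shows "card P mod m = c mod m \<longleftrightarrow> card P' mod m = c mod m"
proof -
  note S = STokD[OF ST]
  define A where "A = P - B"
  have A': "A = P' - B'" using S A_def by simp
  show ?thesis
  proof (cases "finite A")
    case False
    then have "infinite P" "infinite P'" using A' A_def finite_subset[of A P] finite_subset[of A P'] by auto
    then show ?thesis by simp
  next
    case True
    have fB: "finite B" "finite B'" using glueD(1,3)[OF gl] glueD(1,3)[OF gl'] finite_subset by auto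
    have cP: "card P = card A + card (P \<inter> B)"
    proof -
      have "P = A \<union> (P \<inter> B)" "A \<inter> (P \<inter> B) = {}" unfolding A_def by auto
      then show ?thesis using True fB card_Un_disjoint[of A "P \<inter> B"] by (metis finite_Int inf_commute)
    qed
    have cP': "card P' = card A + card (P' \<inter> B')"
    proof -
      have "P' = A \<union> (P' \<inter> B')" "A \<inter> (P' \<inter> B') = {}" unfolding A' by auto
      then show ?thesis using True fB card_Un_disjoint[of A "P' \<inter> B'"] by (metis finite_Int inf_commute)
    qed
    define s where "s = card {l. l < length E \<and> Inl (E ! l) \<in> A}"
    have cG: "card (gset G dec B E P) = card (P \<inter> B) + s"
    proof -
      have "card (gset G dec B E P) = card (dec ` (P \<inter> B)) + card (srcset G E A)"
        unfolding gset_split(1)[OF gl, of P] A_def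
        by (rule card_Un_disjoint) (use fB gset_split(2)[OF gl, of P "P - B"] in \<open>auto simp: srcset_def\<close>)
      also have "card (dec ` (P \<inter> B)) = card (P \<inter> B)"
        using glueD(4)[OF gl] by (meson card_image inf_le2 inj_on_subset)
      finally show ?thesis using card_srcset[OF gl, of A] s_def by simp
    qed
    have cG': "card (gset G' dec' B' E P') = card (P' \<inter> B') + s"
    proof -
      have "card (gset G' dec' B' E P') = card (dec' ` (P' \<inter> B')) + card (srcset G' E A)"
        unfolding gset_split(1)[OF gl', of P'] A'
        by (rule card_Un_disjoint) (use fB gset_split(2)[OF gl', of P' "P' - B'"] in \<open>auto simp: srcset_def\<close>)
      also have "card (dec' ` (P' \<inter> B')) = card (P' \<inter> B')"
        using glueD(4)[OF gl'] by (meson card_image inf_le2 inj_on_subset)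
      finally show ?thesis using card_srcset[OF gl', of A] s_def by simp
    qed
    have "sat G (gnu dec B \<nu>) (\<lambda>X. gset G dec B E (\<sigma> X)) (CardMod SG (card (gset G dec B E P)) m) \<longleftrightarrow>
          sat G' (gnu dec' B' \<nu>') (\<lambda>X. gset G' dec' B' E (\<sigma>' X)) (CardMod SG (card (gset G dec B E P)) m)"
      using S(2,3) m by (intro relD(4)[OF R]) auto
    then have "card (gset G' dec' B' E P') mod m = card (gset G dec B E P) mod m" unfolding S(4) S(5) by simp
    then have "(card (P' \<inter> B') + s) mod m = (card (P \<inter> B) + s) mod m" using cG cG' by simp
    then have "card (P' \<inter> B') mod m = card (P \<inter> B) mod m" by (rule mod_cancel_nat)
    then have "(card A + card (P' \<inter> B')) mod m = (card A + card (P \<inter> B)) mod m" using mod_add_right_eq[of "card A" "card (P' \<inter> B')" m] mod_add_right_eq[of "card A" "card (P \<inter> B)" m] by simp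
    then show ?thesis using cP cP' by simp
  qed
qed


lemma sameA_sym: "sameA D B D' B' \<Longrightarrow> sameA D' B' D B"
  unfolding sameA_def by metis

lemma main:
  "fsz \<phi> < N \<Longrightarrow> glue D G B dec E \<Longrightarrow> glue D' G' B' dec' E \<Longrightarrow> sameA D B D' B' \<Longrightarrow>
   rel Sig mx M k W G B dec G' B' dec' E \<nu> \<sigma> \<nu>' \<sigma>' \<Longrightarrow> ok Sig mx (length (src D)) M \<phi> \<Longrightarrow>
   qrank \<phi> \<le> k \<Longrightarrow> fv2 \<phi> \<subseteq> W \<Longrightarrow> sat D \<nu> \<sigma> \<phi> \<Longrightarrow> sat D' \<nu>' \<sigma>' \<phi>"
proof (induction N arbitrary: \<phi> D G B dec D' G' B' dec' k W \<nu> \<sigma> \<nu>' \<sigma>')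
  case 0 then show ?case by simp
next
  case (Suc N)
  have IHiff: "sat D1 \<nu>1 \<sigma>1 \<psi> \<longleftrightarrow> sat D1' \<nu>1' \<sigma>1' \<psi>"
    if a: "fsz \<psi> < N" "glue D1 G1 B1 dec1 E" "glue D1' G1' B1' dec1' E" "sameA D1 B1 D1' B1'"
      "rel Sig mx M k1 W1 G1 B1 dec1 G1' B1' dec1' E \<nu>1 \<sigma>1 \<nu>1' \<sigma>1'" "ok Sig mx (length (src D1)) M \<psi>"
      "qrank \<psi> \<le> k1" "fv2 \<psi> \<subseteq> W1"
    for \<psi> D1 G1 B1 dec1 D1' G1' B1' dec1' k1 W1 \<nu>1 \<sigma>1 \<nu>1' \<sigma>1'
  proof
    assume "sat D1 \<nu>1 \<sigma>1 \<psi>" then show "sat D1' \<nu>1' \<sigma>1' \<psi>" using Suc.IH a by blast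
  next
    assume h: "sat D1' \<nu>1' \<sigma>1' \<psi>"
    have l: "length (src G1) = length (src G1')" using glueD(7)[OF a(2)] glueD(7)[OF a(3)] by simp
    have l2: "length (src D1') = length (src D1)" using a(4) unfolding sameA_def by simp
    show "sat D1 \<nu>1 \<sigma>1 \<psi>"
      using Suc.IH[OF a(1) a(3) a(2) sameA_sym[OF a(4)] rel_sym[OF a(5) l]] a(6-8) h l2 by simp
  qed
  note gl = Suc.prems(2) and gl' = Suc.prems(3) and sA = Suc.prems(4) and R = Suc.prems(5)
    and ok = Suc.prems(6) and qr = Suc.prems(7) and fw = Suc.prems(8) and sat = Suc.prems(9)
  have uA: "univ D - B = univ D' - B'" using sA unfolding sameA_def by simp
  have STget: "\<exists>SG. STok Sig mx M W G B dec G' B' dec' E \<nu> \<sigma> \<nu>' \<sigma>' (seval D \<nu> \<sigma> S) (seval D' \<nu>' \<sigma>' S) SG"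
    if S: "ssz S \<le> N" "ok_s Sig mx (length (src D)) M S" "fv2_s S \<subseteq> W" for S
  proof -
    have "seval D \<nu> \<sigma> S - B = seval D' \<nu>' \<sigma>' S - B' \<and>
      (\<exists>SG. ok_s Sig mx (length (src G)) M SG \<and> fv2_s SG \<subseteq> fv2_s S \<and>
       gset G dec B E (seval D \<nu> \<sigma> S) = seval G (gnu dec B \<nu>) (\<lambda>X. gset G dec B E (\<sigma> X)) SG \<and>
       gset G' dec' B' E (seval D' \<nu>' \<sigma>' S) = seval G' (gnu dec' B' \<nu>') (\<lambda>X. gset G' dec' B' E (\<sigma>' X)) SG)"
    proof (rule set_term[OF R gl gl' sA S(2)])
      fix \<psi> u assume a: "S = SConst \<psi>" "u \<notin> B" "u \<in> univ D"
      have u': "u \<notin> B'" using a uA by blast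
      have okp: "ok Sig mx (length (src D)) M \<psi>" "qrank \<psi> = 0" "fv2 \<psi> = {}" using S(2) a(1) by auto
      show "sat D (\<nu>(0 := u)) \<sigma> \<psi> \<longleftrightarrow> sat D' (\<nu>'(0 := u)) \<sigma>' \<psi>"
        by (rule IHiff[OF _ gl gl' sA rel_updA[OF R a(2) u'] okp(1)]) (use S(1) a(1) okp in auto)
    next
      fix \<psi> \<chi> assume a: "S = SConst \<psi>" "ok Sig mx (length (src D)) M \<chi>" "qrank \<chi> = 0" "fv1 \<chi> = {}" "fv2 \<chi> = {}"
        "fsz \<chi> \<le> fsz \<psi>"
      show "sat D \<nu> \<sigma> \<chi> \<longleftrightarrow> sat D' \<nu>' \<sigma>' \<chi>"
        by (rule IHiff[OF _ gl gl' sA R a(2)]) (use S(1) a in auto)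
    qed
    then show ?thesis unfolding STok_def using S(3) by blast
  qed
  show ?case
  proof (cases \<phi>)
    case (Eq s t) then show ?thesis using atom_Eq[OF R gl gl' sA] ok sat by blast
  next
    case (Lab a t) then show ?thesis using atom_Lab[OF R gl gl' sA] ok sat by blast
  next
    case (Inc i s t) then show ?thesis using atom_Inc[OF R gl gl' sA] ok sat by blast
  next
    case (Mem t S)
    obtain SG where ST: "STok Sig mx M W G B dec G' B' dec' E \<nu> \<sigma> \<nu>' \<sigma>' (seval D \<nu> \<sigma> S) (seval D' \<nu>' \<sigma>' S) SG"
      using STget[of S] Suc.prems(1) ok fw Mem by auto
    show ?thesis using atomP_Mem[OF R gl gl' sA ST, of t] ok sat Mem by simp
  next
    case (CardMod S c m)
    obtain SG where ST: "STok Sig mx M W G B dec G' B' dec' E \<nu> \<sigma> \<nu>' \<sigma>' (seval D \<nu> \<sigma> S) (seval D' \<nu>' \<sigma>' S) SG"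
      using STget[of S] Suc.prems(1) ok fw CardMod by auto
    show ?thesis using atomP_Card[OF R gl gl' ST, of m c] ok sat CardMod by simp
  next
    case (Subset S T)
    obtain SG where ST1: "STok Sig mx M W G B dec G' B' dec' E \<nu> \<sigma> \<nu>' \<sigma>' (seval D \<nu> \<sigma> S) (seval D' \<nu>' \<sigma>' S) SG"
      using STget[of S] Suc.prems(1) ok fw Subset by auto
    obtain TG where ST2: "STok Sig mx M W G B dec G' B' dec' E \<nu> \<sigma> \<nu>' \<sigma>' (seval D \<nu> \<sigma> T) (seval D' \<nu>' \<sigma>' T) TG"
      using STget[of T] Suc.prems(1) ok fw Subset by auto
    show ?thesis using atomP_Subset[OF R gl gl' ST1 ST2] sat Subset by simp
  next
    case (Single S)
    obtain SG where ST: "STok Sig mx M W G B dec G' B' dec' E \<nu> \<sigma> \<nu>' \<sigma>' (seval D \<nu> \<sigma> S) (seval D' \<nu>' \<sigma>' S) SG"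
      using STget[of S] Suc.prems(1) ok fw Single by auto
    show ?thesis using atomP_Single[OF R gl gl' ST] sat Single by simp
  next
    case (Neg \<psi>)
    have "sat D \<nu> \<sigma> \<psi> \<longleftrightarrow> sat D' \<nu>' \<sigma>' \<psi>"
      by (rule IHiff[OF _ gl gl' sA R]) (use Suc.prems(1) ok qr fw Neg in auto)
    then show ?thesis using sat Neg by simp
  next
    case (Conj \<psi>1 \<psi>2)
    have "sat D \<nu> \<sigma> \<psi>1 \<longleftrightarrow> sat D' \<nu>' \<sigma>' \<psi>1"
      by (rule IHiff[OF _ gl gl' sA R]) (use Suc.prems(1) ok qr fw Conj in auto)
    moreover have "sat D \<nu> \<sigma> \<psi>2 \<longleftrightarrow> sat D' \<nu>' \<sigma>' \<psi>2"
      by (rule IHiff[OF _ gl gl' sA R]) (use Suc.prems(1) ok qr fw Conj in auto)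
    ultimately show ?thesis using sat Conj by simp
  next
    case (Ex1 x \<psi>)
    obtain k' where k: "k = Suc k'" "qrank \<psi> \<le> k'" using qr Ex1 by (cases k) auto
    obtain u where u: "u \<in> univ D" "sat D (\<nu>(x := u)) \<sigma> \<psi>" using sat Ex1 by auto
    have okp: "ok Sig mx (length (src D)) M \<psi>" "fv2 \<psi> \<subseteq> W" "fsz \<psi> < N" using ok fw Suc.prems(1) Ex1 by auto
    show ?thesis
    proof (cases "u \<in> B")
      case False
      have u': "u \<notin> B'" "u \<in> univ D'" using u(1) False uA by blast+
      have "sat D' (\<nu>'(x := u)) \<sigma>' \<psi>"
        using IHiff[OF okp(3) gl gl' sA rel_updA[OF rel_mono[OF R, of k'] False u'(1)] okp(1) k(2) okp(2)] u(2) k by simp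
      then show ?thesis using u' Ex1 by auto
    next
      case True
      obtain u' where u': "u' \<in> B'" "rel Sig mx M k' W G B dec G' B' dec' E (\<nu>(x := u)) \<sigma> (\<nu>'(x := u')) \<sigma>'"
        using rel_updB[OF R[unfolded k(1)] gl gl' True] by blast
      have "sat D' (\<nu>'(x := u')) \<sigma>' \<psi>"
        using IHiff[OF okp(3) gl gl' sA u'(2) okp(1) k(2) okp(2)] u(2) by simp
      moreover have "u' \<in> univ D'" using u'(1) glueD(3)[OF gl'] by blast
      ultimately show ?thesis using Ex1 by auto
    qed
  next
    case (Ex2 X \<psi>)
    obtain k' where k: "k = Suc k'" "qrank \<psi> \<le> k'" using qr Ex2 by (cases k) auto
    obtain U where U: "U \<subseteq> univ D" "sat D \<nu> (\<sigma>(X := U)) \<psi>" using sat Ex2 by auto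
    have okp: "ok Sig mx (length (src D)) M \<psi>" "fv2 \<psi> \<subseteq> insert X W" "fsz \<psi> < N" using ok fw Suc.prems(1) Ex2 by auto
    obtain U' where U': "U' \<subseteq> univ D'" "rel Sig mx M k' (insert X W) G B dec G' B' dec' E \<nu> (\<sigma>(X := U)) \<nu>' (\<sigma>'(X := U'))"
      using rel_updSet[OF R[unfolded k(1)] gl gl' uA U(1)] by blast
    have "sat D' \<nu>' (\<sigma>'(X := U')) \<psi>"
      using IHiff[OF okp(3) gl gl' sA U'(2) okp(1) k(2) okp(2)] U(2) by simp
    then show ?thesis using U'(1) Ex2 by auto
  qed
qed


section \<open>Concrete gluing for flattening\<close>

lemma ne_eo[simp]: "(2 * a :: nat) \<noteq> 2 * b + 1" "(2 * b + 1 :: nat) \<noteq> 2 * a"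
  "(2 * a :: nat) \<noteq> Suc (2 * b)" "Suc (2 * b) \<noteq> 2 * a" by presburger+

lemma verts_flat: "x \<in> verts (flat K) \<longleftrightarrow> (\<exists>v\<in>verts K. x = 2 * v) \<or>
   (\<exists>e v. e \<in> edges K \<and> v \<in> verts (lab K e) \<and> v \<notin> set (src (lab K e)) \<and> x = 2 * prod_encode (e, v) + 1)"
  by (auto simp: flat_def)

lemma edges_flat: "d \<in> edges (flat K) \<longleftrightarrow> (\<exists>e f. e \<in> edges K \<and> f \<in> edges (lab K e) \<and> d = prod_encode (e, f))"
  by (auto simp: flat_def)

lemma lab_flat[simp]: "lab (flat K) (prod_encode (e, f)) = lab (lab K e) f"
  by (simp add: flat_def)

lemma inc_flat[simp]: "inc (flat K) (prod_encode (e, f)) = map (flat_vmap K e) (inc (lab K e) f)"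
  by (simp add: flat_def)

lemma src_flat[simp]: "src (flat K) = map (\<lambda>v. 2 * v) (src K)"
  by (simp add: flat_def)

lemma vmap_src:
  assumes "distinct (src (lab K e))" "l < length (src (lab K e))"
  shows "flat_vmap K e (src (lab K e) ! l) = 2 * (inc K e ! l)"
proof -
  have "(LEAST i. i < length (src (lab K e)) \<and> src (lab K e) ! i = src (lab K e) ! l) = l"
    by (rule Least_equality) (use assms in \<open>auto simp: nth_eq_iff_index_eq\<close>)
  then show ?thesis using assms by (simp add: flat_vmap_def)
qed

lemma vmap_nonsrc: "v \<notin> set (src (lab K e)) \<Longrightarrow> flat_vmap K e v = 2 * prod_encode (e, v) + 1"
  by (simp add: flat_vmap_def)

definition Bset :: "'a hg hg \<Rightarrow> nat \<Rightarrow> (nat + nat) set" where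
  "Bset K e = {Inl (2 * prod_encode (e, v) + 1) | v. v \<in> verts (lab K e) \<and> v \<notin> set (src (lab K e))}
            \<union> {Inr (prod_encode (e, f)) | f. f \<in> edges (lab K e)}"

definition decf :: "nat + nat \<Rightarrow> nat + nat" where
  "decf x = (case x of Inl w \<Rightarrow> Inl (snd (prod_decode (w div 2))) | Inr d \<Rightarrow> Inr (snd (prod_decode d)))"

lemma decf_simps[simp]: "decf (Inl (2 * prod_encode (e, v) + 1)) = Inl v" "decf (Inr (prod_encode (e, f))) = Inr f"
  "decf (Inl (Suc (2 * prod_encode (e, v)))) = Inl v"
  by (simp_all add: decf_def)

definition Eset :: "'a hg hg \<Rightarrow> nat \<Rightarrow> nat list" where
  "Eset K e = map (\<lambda>v. 2 * v) (inc K e)"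

lemma HSD:
  assumes "G \<in> HS Sig ar"
  shows "finite (verts G)" "finite (edges G)" "distinct (src G)" "set (src G) \<subseteq> verts G"
    "\<And>f. f \<in> edges G \<Longrightarrow> lab G f \<in> Sig \<and> length (inc G f) = ar (lab G f) \<and> distinct (inc G f) \<and> set (inc G f) \<subseteq> verts G"
  using assms unfolding HS_def wf_hg_def by auto

lemma wfKD:
  assumes "wf_hg (HS Sig ar) arity K"
  shows "finite (verts K)" "finite (edges K)" "distinct (src K)" "set (src K) \<subseteq> verts K"
    "\<And>e. e \<in> edges K \<Longrightarrow> lab K e \<in> HS Sig ar \<and> length (inc K e) = arity (lab K e) \<and> distinct (inc K e) \<and> set (inc K e) \<subseteq> verts K"
  using assms unfolding wf_hg_def by auto

lemma finite_univ_flat: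
  assumes K: "wf_hg (HS Sig ar) arity K"
  shows "finite (verts (flat K))" "finite (edges (flat K))" "finite (univ (flat K))"
proof -
  have lk: "\<And>e. e \<in> edges K \<Longrightarrow> lab K e \<in> HS Sig ar" using wfKD(5)[OF K] by blast
  have fs: "finite (SIGMA e:edges K. verts (lab K e))" "finite (SIGMA e:edges K. edges (lab K e))"
    using wfKD(2)[OF K] HSD(1)[OF lk] HSD(2)[OF lk] by (intro finite_SigmaI; simp)+
  have "verts (flat K) \<subseteq> (\<lambda>v. 2 * v) ` verts K \<union> (\<lambda>(e, v). 2 * prod_encode (e, v) + 1) ` (SIGMA e:edges K. verts (lab K e))"
    unfolding flat_def by auto
  then show fv: "finite (verts (flat K))" using fs wfKD(1)[OF K] finite_subset by blast
  have "edges (flat K) \<subseteq> (\<lambda>(e, f). prod_encode (e, f)) ` (SIGMA e:edges K. edges (lab K e))"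
    unfolding flat_def by auto
  then show fe: "finite (edges (flat K))" using fs finite_subset by blast
  show "finite (univ (flat K))" using fv fe by (simp add: univ_def)
qed


lemma vmap_cases:
  assumes K: "wf_hg (HS Sig ar) arity K" and e: "e \<in> edges K" and v: "v \<in> verts (lab K e)"
  shows "(\<exists>l < length (src (lab K e)). v = src (lab K e) ! l \<and> flat_vmap K e v = 2 * (inc K e ! l) \<and> inc K e ! l \<in> verts K)
         \<or> (v \<notin> set (src (lab K e)) \<and> flat_vmap K e v = 2 * prod_encode (e, v) + 1)"
proof (cases "v \<in> set (src (lab K e))")
  case True
  then obtain l where l: "l < length (src (lab K e))" "v = src (lab K e) ! l" by (metis in_set_conv_nth)
  have G: "lab K e \<in> HS Sig ar" "length (inc K e) = arity (lab K e)" "set (inc K e) \<subseteq> verts K"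
    using wfKD(5)[OF K e] by auto
  have "flat_vmap K e v = 2 * (inc K e ! l)" using vmap_src[OF HSD(3)[OF G(1)] l(1)] l(2) by simp
  moreover have "inc K e ! l \<in> verts K" using G l(1) by (metis arity_def nth_mem subsetD)
  ultimately show ?thesis using l by blast
next
  case False then show ?thesis using vmap_nonsrc[OF False] by simp
qed

lemma vmap_in:
  assumes K: "wf_hg (HS Sig ar) arity K" and e: "e \<in> edges K" and v: "v \<in> verts (lab K e)"
  shows "flat_vmap K e v \<in> verts (flat K)"
  using vmap_cases[OF K e v] e v unfolding verts_flat by blast

lemma vmap_inj:
  assumes K: "wf_hg (HS Sig ar) arity K" and e: "e \<in> edges K"
  shows "inj_on (flat_vmap K e) (verts (lab K e))"
proof
  fix v1 v2 assume v: "v1 \<in> verts (lab K e)" "v2 \<in> verts (lab K e)" and eq: "flat_vmap K e v1 = flat_vmap K e v2"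
  have G: "lab K e \<in> HS Sig ar" "length (inc K e) = arity (lab K e)" "distinct (inc K e)"
    using wfKD(5)[OF K e] by auto
  note c1 = vmap_cases[OF K e v(1)] and c2 = vmap_cases[OF K e v(2)]
  show "v1 = v2"
  proof (cases "v1 \<in> set (src (lab K e))")
    case True
    then obtain l1 where l1: "l1 < length (src (lab K e))" "v1 = src (lab K e) ! l1" "flat_vmap K e v1 = 2 * (inc K e ! l1)"
      using c1 by blast
    show ?thesis
    proof (cases "v2 \<in> set (src (lab K e))")
      case True
      then obtain l2 where l2: "l2 < length (src (lab K e))" "v2 = src (lab K e) ! l2" "flat_vmap K e v2 = 2 * (inc K e ! l2)"
        using c2 by blast
      have "inc K e ! l1 = inc K e ! l2" using eq l1(3) l2(3) by simp
      then have "l1 = l2" using G l1(1) l2(1) by (simp add: arity_def nth_eq_iff_index_eq)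
      then show ?thesis using l1 l2 by simp
    next
      case False
      then have "flat_vmap K e v2 = 2 * prod_encode (e, v2) + 1" using vmap_nonsrc by blast
      then show ?thesis using eq l1(3) by simp
    qed
  next
    case False
    then have f1: "flat_vmap K e v1 = 2 * prod_encode (e, v1) + 1" using vmap_nonsrc by blast
    show ?thesis
    proof (cases "v2 \<in> set (src (lab K e))")
      case True
      then obtain l2 where "flat_vmap K e v2 = 2 * (inc K e ! l2)" using c2 by blast
      then show ?thesis using eq f1 by simp
    next
      case False
      then have "flat_vmap K e v2 = 2 * prod_encode (e, v2) + 1" using vmap_nonsrc by blast
      then show ?thesis using eq f1 by (simp add: prod_encode_eq)
    qed
  qed
qed

lemma flat_HS:
  assumes K: "wf_hg (HS Sig ar) arity K"
  shows "flat K \<in> HS Sig ar"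
  unfolding HS_def mem_Collect_eq wf_hg_def
proof (intro conjI ballI)
  show "finite (verts (flat K))" "finite (edges (flat K))" using finite_univ_flat[OF K] by auto
next
  fix d assume "d \<in> edges (flat K)"
  then obtain e f where ef: "e \<in> edges K" "f \<in> edges (lab K e)" "d = prod_encode (e, f)" unfolding edges_flat by blast
  have G: "lab K e \<in> HS Sig ar" using wfKD(5)[OF K ef(1)] by blast
  note Gf = HSD(5)[OF G ef(2)]
  show "lab (flat K) d \<in> Sig" using ef Gf by simp
  show "length (inc (flat K) d) = ar (lab (flat K) d)" using ef Gf by simp
  show "distinct (inc (flat K) d)" using ef Gf vmap_inj[OF K ef(1)] by (simp add: distinct_map inj_on_subset)
  show "set (inc (flat K) d) \<subseteq> verts (flat K)" using ef Gf vmap_in[OF K ef(1)] by auto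
next
  show "distinct (src (flat K))" using wfKD(3)[OF K] by (simp add: distinct_map inj_on_def)
  show "set (src (flat K)) \<subseteq> verts (flat K)" using wfKD(4)[OF K] by (auto simp: verts_flat)
qed


lemma Bset_mem:
  "x \<in> Bset K e \<longleftrightarrow> (\<exists>v. v \<in> verts (lab K e) \<and> v \<notin> set (src (lab K e)) \<and> x = Inl (2 * prod_encode (e, v) + 1))
                     \<or> (\<exists>f. f \<in> edges (lab K e) \<and> x = Inr (prod_encode (e, f)))"
  unfolding Bset_def by blast

lemma Inl_even_notB[simp]: "Inl (2 * w) \<notin> Bset K e"
  unfolding Bset_mem by auto

lemma glue_flat:
  assumes K: "wf_hg (HS Sig ar) arity K" and e: "e \<in> edges K"
  shows "glue (flat K) (lab K e) (Bset K e) decf (Eset K e)"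
proof -
  define G where "G = lab K e"
  have G: "G \<in> HS Sig ar" "length (inc K e) = length (src G)" "distinct (inc K e)" "set (inc K e) \<subseteq> verts K"
    using wfKD(5)[OF K e] unfolding G_def arity_def by auto
  note GD = HSD[OF G(1)]
  have c1: "finite (univ (flat K))" using finite_univ_flat[OF K] by simp
  have c2: "finite (univ G)" using GD by (simp add: univ_def)
  have c3: "Bset K e \<subseteq> univ (flat K)"
    using e by (auto simp: Bset_mem univ_def verts_flat edges_flat G_def)
  have c4: "inj_on decf (Bset K e)"
  proof (rule inj_onI)
    fix x y assume "x \<in> Bset K e" "y \<in> Bset K e" "decf x = decf y"
    then show "x = y" unfolding Bset_mem by auto
  qed
  have c5: "decf ` Bset K e = internal G"
  proof
    show "decf ` Bset K e \<subseteq> internal G"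
    proof
      fix x assume "x \<in> decf ` Bset K e"
      then obtain b where b: "b \<in> Bset K e" "x = decf b" by blast
      then show "x \<in> internal G" unfolding Bset_mem by (auto simp: internal_def univ_def G_def)
    qed
  next
    show "internal G \<subseteq> decf ` Bset K e"
    proof
      fix x assume "x \<in> internal G"
      then consider (a) v where "v \<in> verts G" "v \<notin> set (src G)" "x = Inl v" | (b) f where "f \<in> edges G" "x = Inr f"
        unfolding internal_def univ_def by blast
      then show "x \<in> decf ` Bset K e"
      proof cases
        case a
        then have "Inl (2 * prod_encode (e, v) + 1) \<in> Bset K e" unfolding Bset_mem G_def by blast
        then show ?thesis using a by (metis decf_simps(1) image_eqI)
      next
        case b
        then have "Inr (prod_encode (e, f)) \<in> Bset K e" unfolding Bset_mem G_def by blast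
        then show ?thesis using b by (metis decf_simps(2) image_eqI)
      qed
    qed
  qed
  have c6: "\<forall>b\<in>Bset K e. isl (decf b) = isl b" by (auto simp: Bset_mem)
  have c7: "length (Eset K e) = length (src G)" using G(2) by (simp add: Eset_def)
  have c8: "distinct (Eset K e)" using G(3) by (simp add: Eset_def distinct_map inj_on_def)
  have c11: "Inl ` set (Eset K e) \<subseteq> univ (flat K) - Bset K e"
    using G(4) by (auto simp: Eset_def univ_def verts_flat)
  have c12: "Inl ` set (src (flat K)) \<inter> Bset K e = {}" by auto
  have c13: "\<forall>d. Inr d \<in> univ (flat K) - Bset K e \<longrightarrow> Inl ` set (inc (flat K) d) \<inter> Bset K e = {}"
  proof (intro allI impI)
    fix d assume d: "Inr d \<in> univ (flat K) - Bset K e"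
    then have "d \<in> edges (flat K)" by (auto simp: univ_def)
    then obtain e' f where ef: "e' \<in> edges K" "f \<in> edges (lab K e')" "d = prod_encode (e', f)"
      unfolding edges_flat by blast
    have "e' \<noteq> e" using d ef by (auto simp: Bset_mem)
    have "\<And>w. w \<in> set (inc (lab K e') f) \<Longrightarrow> Inl (flat_vmap K e' w) \<notin> Bset K e"
    proof -
      fix w assume w: "w \<in> set (inc (lab K e') f)"
      have G': "lab K e' \<in> HS Sig ar" using wfKD(5)[OF K ef(1)] by blast
      have "w \<in> verts (lab K e')" using w HSD(5)[OF G' ef(2)] by blast
      from vmap_cases[OF K ef(1) this] show "Inl (flat_vmap K e' w) \<notin> Bset K e"
        using \<open>e' \<noteq> e\<close> by (auto simp: Bset_mem prod_encode_eq)
    qed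
    then show "Inl ` set (inc (flat K) d) \<inter> Bset K e = {}" using ef by auto
  qed
  have c14: "\<forall>d. Inr d \<in> Bset K e \<longrightarrow> (\<exists>f. decf (Inr d) = Inr f \<and> f \<in> edges G \<and> lab (flat K) d = lab G f \<and>
        length (inc (flat K) d) = length (inc G f) \<and>
        (\<forall>i<length (inc G f). glo (Bset K e) decf (Eset K e) G (Inl (inc (flat K) d ! i)) = Some (Inl (inc G f ! i))))"
  proof (intro allI impI)
    fix d assume "Inr d \<in> Bset K e"
    then obtain f where f: "f \<in> edges G" "d = prod_encode (e, f)" unfolding Bset_mem G_def by auto
    have gi: "glo (Bset K e) decf (Eset K e) G (Inl (inc (flat K) d ! i)) = Some (Inl (inc G f ! i))"
      if i: "i < length (inc G f)" for i
    proof -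
      define w where "w = inc G f ! i"
      have w: "w \<in> verts G" using GD(5)[OF f(1)] i unfolding w_def by (meson nth_mem subsetD)
      have iv: "inc (flat K) d ! i = flat_vmap K e w" using f i unfolding w_def G_def by simp
      from vmap_cases[OF K e w[unfolded G_def]]
      show ?thesis
      proof
        assume "\<exists>l<length (src (lab K e)). w = src (lab K e) ! l \<and> flat_vmap K e w = 2 * (inc K e ! l) \<and> inc K e ! l \<in> verts K"
        then obtain l where l: "l < length (src G)" "w = src G ! l" "flat_vmap K e w = 2 * (inc K e ! l)" unfolding G_def by blast
        have El: "Eset K e ! l = 2 * (inc K e ! l)" "l < length (Eset K e)" using l(1) G(2) by (auto simp: Eset_def)
        have "2 * (inc K e ! l) \<in> set (Eset K e)" using El by (metis nth_mem)
        moreover have "idxE (Eset K e) (2 * (inc K e ! l)) = l" using idxE_nth[OF c8 El(2)] El(1) by simp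
        ultimately show ?thesis using iv l unfolding glo_def w_def by simp
      next
        assume a: "w \<notin> set (src (lab K e)) \<and> flat_vmap K e w = 2 * prod_encode (e, w) + 1"
        then have "Inl (2 * prod_encode (e, w) + 1) \<in> Bset K e" using w unfolding Bset_mem G_def by blast
        then show ?thesis using iv a unfolding glo_def w_def by simp
      qed
    qed
    show "\<exists>f. decf (Inr d) = Inr f \<and> f \<in> edges G \<and> lab (flat K) d = lab G f \<and>
        length (inc (flat K) d) = length (inc G f) \<and>
        (\<forall>i<length (inc G f). glo (Bset K e) decf (Eset K e) G (Inl (inc (flat K) d ! i)) = Some (Inl (inc G f ! i)))"
      using f gi unfolding G_def by auto
  qed
  have c10: "Inl ` set (src G) \<subseteq> univ G" using GD(4) by (auto simp: univ_def)
  show ?thesis unfolding glue_def G_def[symmetric]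
    by (intro conjI c1 c2 c3 c4 c5 c6 c7 c8 GD(3) c10 c11 c12 c13 c14)
qed


lemma univ_minus_B:
  "x \<in> univ (flat K) - Bset K e \<longleftrightarrow> (\<exists>v\<in>verts K. x = Inl (2 * v)) \<or>
     (\<exists>e'' v. e'' \<in> edges K \<and> e'' \<noteq> e \<and> v \<in> verts (lab K e'') \<and> v \<notin> set (src (lab K e'')) \<and> x = Inl (2 * prod_encode (e'', v) + 1)) \<or>
     (\<exists>e'' f. e'' \<in> edges K \<and> e'' \<noteq> e \<and> f \<in> edges (lab K e'') \<and> x = Inr (prod_encode (e'', f)))"
proof
  assume "x \<in> univ (flat K) - Bset K e"
  then have x: "x \<in> univ (flat K)" "x \<notin> Bset K e" by auto
  from x(1) consider (a) w where "w \<in> verts (flat K)" "x = Inl w" | (b) d where "d \<in> edges (flat K)" "x = Inr d"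
    unfolding univ_def by blast
  then show "(\<exists>v\<in>verts K. x = Inl (2 * v)) \<or>
     (\<exists>e'' v. e'' \<in> edges K \<and> e'' \<noteq> e \<and> v \<in> verts (lab K e'') \<and> v \<notin> set (src (lab K e'')) \<and> x = Inl (2 * prod_encode (e'', v) + 1)) \<or>
     (\<exists>e'' f. e'' \<in> edges K \<and> e'' \<noteq> e \<and> f \<in> edges (lab K e'') \<and> x = Inr (prod_encode (e'', f)))"
  proof cases
    case a
    then show ?thesis using x(2) unfolding verts_flat by (auto simp: Bset_mem)
  next
    case b
    then show ?thesis using x(2) unfolding edges_flat by (auto simp: Bset_mem)
  qed
next
  assume "(\<exists>v\<in>verts K. x = Inl (2 * v)) \<or>
     (\<exists>e'' v. e'' \<in> edges K \<and> e'' \<noteq> e \<and> v \<in> verts (lab K e'') \<and> v \<notin> set (src (lab K e'')) \<and> x = Inl (2 * prod_encode (e'', v) + 1)) \<or>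
     (\<exists>e'' f. e'' \<in> edges K \<and> e'' \<noteq> e \<and> f \<in> edges (lab K e'') \<and> x = Inr (prod_encode (e'', f)))"
  then show "x \<in> univ (flat K) - Bset K e"
    by (auto simp: Bset_mem univ_def verts_flat edges_flat prod_encode_eq)
qed

lemma vmap_cong: "lab K' e = lab K e \<Longrightarrow> inc K' e = inc K e \<Longrightarrow> flat_vmap K' e = flat_vmap K e"
  by (simp add: flat_vmap_def fun_eq_iff)

lemma sameA_flat:
  assumes eqs: "verts K' = verts K" "edges K' = edges K" "inc K' = inc K" "src K' = src K"
    and labs: "\<And>e''. e'' \<in> edges K \<Longrightarrow> e'' \<noteq> e \<Longrightarrow> lab K' e'' = lab K e''"
  shows "sameA (flat K) (Bset K e) (flat K') (Bset K' e)"
  unfolding sameA_def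
proof (intro conjI)
  show "univ (flat K) - Bset K e = univ (flat K') - Bset K' e"
  proof (rule set_eqI)
    fix x show "x \<in> univ (flat K) - Bset K e \<longleftrightarrow> x \<in> univ (flat K') - Bset K' e"
      unfolding univ_minus_B eqs using labs by auto
  qed
  show "src (flat K) = src (flat K')" using eqs by simp
  show "\<forall>d. Inr d \<in> univ (flat K) - Bset K e \<longrightarrow> lab (flat K) d = lab (flat K') d \<and> inc (flat K) d = inc (flat K') d"
  proof (intro allI impI)
    fix d assume "Inr d \<in> univ (flat K) - Bset K e"
    then obtain e'' f where ef: "e'' \<in> edges K" "e'' \<noteq> e" "f \<in> edges (lab K e'')" "d = prod_encode (e'', f)"
      unfolding univ_minus_B by auto
    have "flat_vmap K' e'' = flat_vmap K e''" using vmap_cong[OF labs[OF ef(1,2)]] eqs by simp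
    then show "lab (flat K) d = lab (flat K') d \<and> inc (flat K) d = inc (flat K') d"
      using ef labs[OF ef(1,2)] by simp
  qed
qed


lemma cmso_equiv_sym: "(G, H) \<in> cmso_equiv Sig ar M r \<Longrightarrow> (H, G) \<in> cmso_equiv Sig ar M r"
  unfolding cmso_equiv_def by auto

lemma glue_models:
  assumes gl: "glue D G B dec E" and gl': "glue D' G' B' dec' E" and sA: "sameA D B D' B'"
    and n0: "Inl 0 \<notin> B" "Inl 0 \<notin> B'" and GG: "(G, G') \<in> cmso_equiv Sig ar M r"
    and \<phi>: "\<phi> \<in> sentences Sig ar M r (length (src D))" and m: "models D \<phi>"
  shows "models D' \<phi>"
proof -
  define mx where "mx = max_arity Sig ar"
  have g0: "gnu dec B (\<lambda>_. Inl 0) = (\<lambda>_. Inl 0)" "gnu dec' B' (\<lambda>_. Inl 0) = (\<lambda>_. Inl 0)"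
    using n0 by (auto simp: gnu_def)
  have s0: "(\<lambda>X. gset G dec B E ((\<lambda>_. {}) X)) = (\<lambda>_. {})" "(\<lambda>X. gset G' dec' B' E ((\<lambda>_. {}) X)) = (\<lambda>_. {})"
    by (auto simp: gset_def)
  have R0: "rel Sig mx M r {} G B dec G' B' dec' E (\<lambda>_. Inl 0) (\<lambda>_. {}) (\<lambda>_. Inl 0) (\<lambda>_. {})"
    unfolding rel_def
  proof (intro conjI allI impI)
    fix \<psi> assume a: "ok Sig mx (length (src G)) M \<psi> \<and> qrank \<psi> \<le> r \<and> fv1 \<psi> \<subseteq> {x. Inl 0 \<in> B} \<and> fv2 \<psi> \<subseteq> {}"
    have "\<psi> \<in> sentences Sig ar M r (arity G)" using a n0 unfolding sentences_def mx_def arity_def by auto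
    then have "models G \<psi> \<longleftrightarrow> models G' \<psi>" using GG unfolding cmso_equiv_def by auto
    then show "sat G (gnu dec B (\<lambda>_. Inl 0)) (\<lambda>X. gset G dec B E ((\<lambda>_. {}) X)) \<psi> =
         sat G' (gnu dec' B' (\<lambda>_. Inl 0)) (\<lambda>X. gset G' dec' B' E ((\<lambda>_. {}) X)) \<psi>"
      unfolding g0 s0 models_def .
  qed (use n0 in auto)
  have okp: "ok Sig mx (length (src D)) M \<phi>" "qrank \<phi> \<le> r" "fv2 \<phi> \<subseteq> {}" using \<phi> unfolding sentences_def mx_def by auto
  show ?thesis
    using main[of \<phi> "Suc (fsz \<phi>)", OF _ gl gl' sA R0 okp] m unfolding models_def by simp
qed

lemma core:
  assumes K: "wf_hg (HS Sig ar) arity K" and K': "wf_hg (HS Sig ar) arity K'"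
    and eqs: "verts K' = verts K" "edges K' = edges K" "inc K' = inc K" "src K' = src K"
    and labs: "\<And>e''. e'' \<in> edges K \<Longrightarrow> e'' \<noteq> e \<Longrightarrow> lab K' e'' = lab K e''"
    and e: "e \<in> edges K" and eq: "(lab K e, lab K' e) \<in> cmso_equiv Sig ar M r"
  shows "(flat K, flat K') \<in> cmso_equiv Sig ar M r"
proof -
  have e': "e \<in> edges K'" using e eqs by simp
  have EE: "Eset K' e = Eset K e" using eqs by (simp add: Eset_def)
  note gl = glue_flat[OF K e] and gl' = glue_flat[OF K' e', unfolded EE]
  have eqs': "verts K = verts K'" "edges K = edges K'" "inc K = inc K'" "src K = src K'" using eqs by auto
  have labs': "\<And>e''. e'' \<in> edges K' \<Longrightarrow> e'' \<noteq> e \<Longrightarrow> lab K e'' = lab K' e''" using labs eqs by metis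
  note sA = sameA_flat[OF eqs labs] and sA' = sameA_flat[OF eqs' labs']
  have n0: "Inl 0 \<notin> Bset K e" "Inl 0 \<notin> Bset K' e" using Inl_even_notB[of 0] by auto
  have len: "length (src (flat K')) = length (src (flat K))" using eqs by simp
  show ?thesis unfolding cmso_equiv_def
  proof (intro CollectI, unfold case_prod_conv, intro conjI ballI)
    show "flat K \<in> HS Sig ar" "flat K' \<in> HS Sig ar" using flat_HS[OF K] flat_HS[OF K'] .
    show "arity (flat K) = arity (flat K')" using len by (simp add: arity_def)
  next
    fix \<phi> assume \<phi>: "\<phi> \<in> sentences Sig ar M r (arity (flat K))"
    show "models (flat K) \<phi> \<longleftrightarrow> models (flat K') \<phi>"
    proof
      assume "models (flat K) \<phi>"
      then show "models (flat K') \<phi>"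
        using glue_models[OF gl gl' sA n0 eq] \<phi> by (simp add: arity_def)
    next
      assume "models (flat K') \<phi>"
      then show "models (flat K) \<phi>"
        using glue_models[OF gl' gl sA' n0(2) n0(1) cmso_equiv_sym[OF eq]] \<phi> len by (simp add: arity_def)
    qed
  qed
qed


lemma sat_cong:
  assumes eq: "verts G2 = verts G" "edges G2 = edges G" "src G2 = src G"
    "\<And>d. d \<in> edges G \<Longrightarrow> lab G2 d = lab G d \<and> inc G2 d = inc G d"
  shows "sat G2 \<nu> \<sigma> \<phi> = sat G \<nu> \<sigma> \<phi>" "seval G2 \<nu> \<sigma> S = seval G \<nu> \<sigma> S"
proof -
  have u: "univ G2 = univ G" using eq by (simp add: univ_def)
  have tv: "\<And>\<nu> t. tval G2 \<nu> t = tval G \<nu> t" by (case_tac t) (simp_all add: eq)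
  show "sat G2 \<nu> \<sigma> \<phi> = sat G \<nu> \<sigma> \<phi>" "seval G2 \<nu> \<sigma> S = seval G \<nu> \<sigma> S"
  proof (induction \<phi> and S arbitrary: \<nu> \<sigma> and \<nu> \<sigma> rule: cmso.induct sterm.induct)
    case (Lab a t) then show ?case using eq(2,4) by (simp add: tv)
  next
    case (Inc i s t) then show ?case using eq(2,4) by (simp add: tv)
  qed (simp_all add: tv u)
qed

lemma flat_agree:
  assumes eqs: "verts K2 = verts K" "edges K2 = edges K" "inc K2 = inc K" "src K2 = src K"
    and labs: "\<And>e. e \<in> edges K \<Longrightarrow> lab K2 e = lab K e"
  shows "verts (flat K2) = verts (flat K)" "edges (flat K2) = edges (flat K)" "src (flat K2) = src (flat K)"
    "\<And>d. d \<in> edges (flat K) \<Longrightarrow> lab (flat K2) d = lab (flat K) d \<and> inc (flat K2) d = inc (flat K) d"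
proof -
  show "verts (flat K2) = verts (flat K)" using eqs labs by (auto simp: verts_flat)
  show "edges (flat K2) = edges (flat K)" using eqs labs by (auto simp: edges_flat)
  show "src (flat K2) = src (flat K)" using eqs by simp
  fix d assume "d \<in> edges (flat K)"
  then obtain e f where ef: "e \<in> edges K" "f \<in> edges (lab K e)" "d = prod_encode (e, f)" unfolding edges_flat by blast
  have "flat_vmap K2 e = flat_vmap K e" using vmap_cong[OF labs[OF ef(1)]] eqs by simp
  then show "lab (flat K2) d = lab (flat K) d \<and> inc (flat K2) d = inc (flat K) d" using ef labs by simp
qed

lemma cmso_equiv_equiv: "equiv (HS Sig ar) (cmso_equiv Sig ar M r)"
  unfolding equiv_def refl_on_def sym_def trans_def cmso_equiv_def by auto

lemma subst_wf:
  assumes t: "t \<in> poly_terms Sig ar Xs arx" and \<eta>: "\<eta> \<in> valuations Sig ar Xs arx"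
  shows "wf_hg (HS Sig ar) arity (subst_vars \<eta> t)"
proof -
  have tw: "wf_hg (Inl ` HS Sig ar \<union> Inr ` Xs) (sum_rank arx) t" using t unfolding poly_terms_def by simp
  have "\<And>e. e \<in> edges t \<Longrightarrow> (case lab t e of Inl G \<Rightarrow> G | Inr x \<Rightarrow> \<eta> x) \<in> HS Sig ar \<and>
        length (inc t e) = arity (case lab t e of Inl G \<Rightarrow> G | Inr x \<Rightarrow> \<eta> x)"
  proof -
    fix e assume e: "e \<in> edges t"
    then have l: "lab t e \<in> Inl ` HS Sig ar \<union> Inr ` Xs" "length (inc t e) = sum_rank arx (lab t e)"
      using tw unfolding wf_hg_def by auto
    show "(case lab t e of Inl G \<Rightarrow> G | Inr x \<Rightarrow> \<eta> x) \<in> HS Sig ar \<and>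
        length (inc t e) = arity (case lab t e of Inl G \<Rightarrow> G | Inr x \<Rightarrow> \<eta> x)"
      using l \<eta> unfolding valuations_def sum_rank_def by (auto split: sum.splits)
  qed
  then show ?thesis using tw unfolding wf_hg_def subst_vars_def by auto
qed


theorem lemma4p12:
  fixes Sig :: "'a set" and ar :: "'a \<Rightarrow> nat" and r :: nat and M :: "nat set"
    and Xs :: "'x set" and arx :: "'x \<Rightarrow> nat"
  assumes "finite Sig" and "finite M"
  shows "congruence_wrt Sig ar (cmso_equiv Sig ar M r) Xs arx"
  unfolding congruence_wrt_def
proof (intro conjI ballI impI)
  show "equiv (HS Sig ar) (cmso_equiv Sig ar M r)" by (rule cmso_equiv_equiv)
next
  fix t \<eta> \<eta>'
  assume t: "t \<in> poly_terms Sig ar Xs arx" and \<eta>: "\<eta> \<in> valuations Sig ar Xs arx" and \<eta>': "\<eta>' \<in> valuations Sig ar Xs arx"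
    and rx: "\<forall>x\<in>Xs. (\<eta> x, \<eta>' x) \<in> cmso_equiv Sig ar M r"
  define R where "R = cmso_equiv Sig ar M r"
  have eqv: "equiv (HS Sig ar) R" unfolding R_def by (rule cmso_equiv_equiv)
  have trans: "\<And>a b c. (a, b) \<in> R \<Longrightarrow> (b, c) \<in> R \<Longrightarrow> (a, c) \<in> R" using eqv unfolding equiv_def trans_def by blast
  have refl: "\<And>a. a \<in> HS Sig ar \<Longrightarrow> (a, a) \<in> R" using eqv unfolding equiv_def refl_on_def by blast
  define K where "K = subst_vars \<eta> t"
  define K' where "K' = subst_vars \<eta>' t"
  have wK: "wf_hg (HS Sig ar) arity K" using subst_wf[OF t \<eta>] K_def by simp
  have wK': "wf_hg (HS Sig ar) arity K'" using subst_wf[OF t \<eta>'] K'_def by simp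
  have tw: "wf_hg (Inl ` HS Sig ar \<union> Inr ` Xs) (sum_rank arx) t" using t unfolding poly_terms_def by simp
  have basic: "verts K' = verts K" "edges K' = edges K" "inc K' = inc K" "src K' = src K" "edges K = edges t"
    unfolding K_def K'_def subst_vars_def by simp_all
  define KS where "KS = (\<lambda>S. K\<lparr>lab := \<lambda>e. if e \<in> S then lab K' e else lab K e\<rparr>)"
  have KSb: "\<And>S. verts (KS S) = verts K" "\<And>S. edges (KS S) = edges K" "\<And>S. inc (KS S) = inc K" "\<And>S. src (KS S) = src K"
    "\<And>S e. lab (KS S) e = (if e \<in> S then lab K' e else lab K e)"
    unfolding KS_def by simp_all
  have wKS: "wf_hg (HS Sig ar) arity (KS S)" for S
    using wK wK' basic unfolding wf_hg_def KSb by auto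
  have labR: "(lab K e, lab K' e) \<in> R" if e: "e \<in> edges t" for e
  proof -
    have "lab t e \<in> Inl ` HS Sig ar \<union> Inr ` Xs" using tw e unfolding wf_hg_def by auto
    then show ?thesis
    proof
      assume "lab t e \<in> Inl ` HS Sig ar"
      then obtain G where "lab t e = Inl G" "G \<in> HS Sig ar" by blast
      then show ?thesis using refl unfolding K_def K'_def subst_vars_def by simp
    next
      assume "lab t e \<in> Inr ` Xs"
      then obtain x where "lab t e = Inr x" "x \<in> Xs" by blast
      then show ?thesis using rx unfolding K_def K'_def subst_vars_def R_def by simp
    qed
  qed
  have chain: "finite S \<Longrightarrow> S \<subseteq> edges t \<Longrightarrow> (flat K, flat (KS S)) \<in> R" for S
  proof (induction S rule: finite_induct)
    case empty
    have "KS {} = K" unfolding KS_def by simp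
    then show ?case using refl flat_HS[OF wK] by simp
  next
    case (insert e S)
    have e: "e \<in> edges K" "e \<in> edges t" using insert.prems basic by auto
    have "(flat (KS S), flat (KS (insert e S))) \<in> R" unfolding R_def
    proof (rule core[OF wKS wKS])
      show "verts (KS (insert e S)) = verts (KS S)" "edges (KS (insert e S)) = edges (KS S)"
        "inc (KS (insert e S)) = inc (KS S)" "src (KS (insert e S)) = src (KS S)" by (simp_all add: KSb)
      show "\<And>e''. e'' \<in> edges (KS S) \<Longrightarrow> e'' \<noteq> e \<Longrightarrow> lab (KS (insert e S)) e'' = lab (KS S) e''" by (simp add: KSb)
      show "e \<in> edges (KS S)" using e by (simp add: KSb)
      show "(lab (KS S) e, lab (KS (insert e S)) e) \<in> cmso_equiv Sig ar M r"
        using labR[OF e(2)] insert.hyps(2) unfolding R_def by (simp add: KSb)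
    qed
    then show ?case using trans insert by blast
  qed
  have fin: "finite (edges t)" using tw unfolding wf_hg_def by simp
  have c1: "(flat K, flat (KS (edges t))) \<in> R" using chain[OF fin] by simp
  note fa = flat_agree[of K' "KS (edges t)"]
  have fa': "verts (flat K') = verts (flat (KS (edges t)))" "edges (flat K') = edges (flat (KS (edges t)))"
    "src (flat K') = src (flat (KS (edges t)))"
    "\<And>d. d \<in> edges (flat (KS (edges t))) \<Longrightarrow> lab (flat K') d = lab (flat (KS (edges t))) d \<and> inc (flat K') d = inc (flat (KS (edges t))) d"
    using fa basic by (simp_all add: KSb)
  have c2: "(flat (KS (edges t)), flat K') \<in> R"
  proof -
    have "\<And>\<phi>. models (flat K') \<phi> = models (flat (KS (edges t))) \<phi>"
      unfolding models_def by (rule sat_cong(1)[OF fa'])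
    moreover have "arity (flat K') = arity (flat (KS (edges t)))" using fa'(3) by (simp add: arity_def)
    ultimately show ?thesis using flat_HS[OF wKS] flat_HS[OF wK'] unfolding R_def cmso_equiv_def by auto
  qed
  have "(flat K, flat K') \<in> R" using trans[OF c1 c2] .
  then show "(poly_op t \<eta>, poly_op t \<eta>') \<in> cmso_equiv Sig ar M r"
    unfolding poly_op_def K_def K'_def R_def .
qed

end
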